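(* Let $\iota:\mathcal{Q}\to\mathcal{P}$ be an aligned grid inclusion with $\mathcal{Q}$ finite (and $\mathcal{P}$ an arbitrary grid poset). Then the restriction functor $\mathrm{Res}_\iota:\operatorname{rep}\mathcal{P}\to\operatorname{rep}\mathcal{Q}$, $M\mapsto M\circ\iota$, has a left adjoint $\mathrm{Lan}_\iota:\operatorname{rep}\mathcal{Q}\to\operatorname{rep}\mathcal{P}$, which is exact and fully faithful, and which maps spread-approximations (in $\operatorname{rep}\mathcal{Q}$) to spread-approximations (in $\operatorname{rep}\mathcal{P}$).
   Context: Fix a field $\mathbb{k}$. Representations of a poset $\mathcal{P}$ are functors $\mathcal{P}\to\mathrm{Vec}_\mathbb{k}$ (viewing $\mathcal{P}$ as a category). $\uparrow S=\{p:\exists s\in S, s\le p\}$. A spread is a subset that is convex ($s\le p\le s'$, $s,s'\in S$ implies $p\in S$) and connected (nonempty, any two elements joined by a zigzag of comparable elements in $S$). $\mathbb{k}_S$ denotes the indicator representation of a convex set $S$ (value $\mathbb{k}$ on $S$, $0$ elsewhere, identity maps inside $S$). $\operatorname{rep}\mathcal{P}$ is the category of finitely presented representations (cokernels of morphisms between finite direct sums of $\mathbb{k}_{\uparrow\{p\}}$). A spread-approximation of $M\in\operatorname{rep}\mathcal{P}$ is a morphism $f:C\to M$ with $C$ a direct summand of a finite direct sum of finitely presented spread representations, such that every morphism from such a representation to $M$ factors through $f$. A grid poset is a finite product of totally ordered sets with the product order. An aligned grid inclusion $\mathcal{Q}_1\times\cdots\times\mathcal{Q}_n\to\mathcal{P}_1\times\cdots\times\mathcal{P}_n$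 is a map of the form $\iota_1\times\cdots\times\iota_n$ with each $\iota_j:\mathcal{Q}_j\to\mathcal{P}_j$ an injective order-preserving map between totally ordered sets. *)

theory Defs
  imports "Jordan_Normal_Form.Matrix"
begin

text \<open>Concrete model of pointwise finite-dimensional representations of a poset (X, lr):
 a representation assigns to each point p a dimension d p (the space k^(d p)) and to each
 comparable pair p \<le> q a matrix (d q) x (d p); outside X / on non-comparable pairs the data is
 canonically zero. Finitely presented representations are pointwise finite-dimensional,
 so every object of rep P is isomorphic to one of these.\<close>

type_synonym ('p,'k) prep = "('p \<Rightarrow> nat) \<times> ('p \<Rightarrow> 'p \<Rightarrow> 'k mat)"
type_synonym ('p,'k) pmor = "'p \<Rightarrow> 'k mat"

definition is_rep :: "'p set \<Rightarrow> ('p \<Rightarrow> 'p \<Rightarrow> bool) \<Rightarrow> ('p,'k::field) prep \<Rightarrow> bool" where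
"is_rep X lr M \<longleftrightarrow>
  (\<forall>p. p \<notin> X \<longrightarrow> fst M p = 0) \<and>
  (\<forall>p q. \<not> (p \<in> X \<and> q \<in> X \<and> lr p q) \<longrightarrow> snd M p q = 0\<^sub>m (fst M q) (fst M p)) \<and>
  (\<forall>p\<in>X. \<forall>q\<in>X. lr p q \<longrightarrow> snd M p q \<in> carrier_mat (fst M q) (fst M p)) \<and>
  (\<forall>p\<in>X. snd M p p = 1\<^sub>m (fst M p)) \<and>
  (\<forall>p\<in>X. \<forall>q\<in>X. \<forall>s\<in>X. lr p q \<and> lr q s \<longrightarrow> snd M p s = snd M q s * snd M p q)"

definition is_mor :: "'p set \<Rightarrow> ('p \<Rightarrow> 'p \<Rightarrow> bool) \<Rightarrow> ('p,'k::field) prep \<Rightarrow> ('p,'k) prep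
    \<Rightarrow> ('p,'k) pmor \<Rightarrow> bool" where
"is_mor X lr M N f \<longleftrightarrow> is_rep X lr M \<and> is_rep X lr N \<and>
  (\<forall>p. p \<notin> X \<longrightarrow> f p = 0\<^sub>m (fst N p) (fst M p)) \<and>
  (\<forall>p\<in>X. f p \<in> carrier_mat (fst N p) (fst M p)) \<and>
  (\<forall>p\<in>X. \<forall>q\<in>X. lr p q \<longrightarrow> f q * snd M p q = snd N p q * f p)"

definition id_mor :: "'p set \<Rightarrow> ('p,'k::field) prep \<Rightarrow> ('p,'k) pmor" where
"id_mor X M = (\<lambda>p. if p \<in> X then 1\<^sub>m (fst M p) else 0\<^sub>m (fst M p) (fst M p))"

definition comp_mor :: "('p,'k::field) pmor \<Rightarrow> ('p,'k) pmor \<Rightarrow> ('p,'k) pmor" where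
"comp_mor g f = (\<lambda>p. g p * f p)"

definition zero_rep :: "('p,'k::field) prep" where
"zero_rep = (\<lambda>p. 0, \<lambda>p q. 0\<^sub>m 0 0)"

definition dsum :: "('p,'k::field) prep \<Rightarrow> ('p,'k) prep \<Rightarrow> ('p,'k) prep" where
"dsum M N = (\<lambda>p. fst M p + fst N p,
   \<lambda>p q. four_block_mat (snd M p q) (0\<^sub>m (fst M q) (fst N p))
                        (0\<^sub>m (fst N q) (fst M p)) (snd N p q))"

definition dsum_list :: "('p,'k::field) prep list \<Rightarrow> ('p,'k) prep" where
"dsum_list Ms = foldr dsum Ms zero_rep"

definition indicator_rep :: "('p \<Rightarrow> 'p \<Rightarrow> bool) \<Rightarrow> 'p set \<Rightarrow> ('p,'k::field) prep" where
"indicator_rep lr S = (\<lambda>p. if p \<in> S then 1 else 0,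
   \<lambda>p q. if p \<in> S \<and> q \<in> S \<and> lr p q then 1\<^sub>m 1
         else 0\<^sub>m (if q \<in> S then 1 else 0) (if p \<in> S then 1 else 0))"

definition upset :: "'p set \<Rightarrow> ('p \<Rightarrow> 'p \<Rightarrow> bool) \<Rightarrow> 'p set \<Rightarrow> 'p set" where
"upset X lr S = {q \<in> X. \<exists>s\<in>S. lr s q}"

definition free_rep :: "'p set \<Rightarrow> ('p \<Rightarrow> 'p \<Rightarrow> bool) \<Rightarrow> 'p list \<Rightarrow> ('p,'k::field) prep" where
"free_rep X lr as = dsum_list (map (\<lambda>a. indicator_rep lr (upset X lr {a})) as)"

definition mat_img :: "'k::field mat \<Rightarrow> 'k vec set" where
"mat_img A = {A *\<^sub>v v | v. v \<in> carrier_vec (dim_col A)}"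

definition mat_ker :: "'k::field mat \<Rightarrow> 'k vec set" where
"mat_ker A = {v \<in> carrier_vec (dim_col A). A *\<^sub>v v = 0\<^sub>v (dim_row A)}"

definition is_fp :: "'p set \<Rightarrow> ('p \<Rightarrow> 'p \<Rightarrow> bool) \<Rightarrow> ('p,'k::field) prep \<Rightarrow> bool" where
"is_fp X lr M \<longleftrightarrow> is_rep X lr M \<and>
  (\<exists>as bs h e. set as \<subseteq> X \<and> set bs \<subseteq> X \<and>
     is_mor X lr (free_rep X lr as) (free_rep X lr bs) h \<and>
     is_mor X lr (free_rep X lr bs) M e \<and>
     (\<forall>p\<in>X. mat_img (h p) = mat_ker (e p) \<and> mat_img (e p) = carrier_vec (fst M p)))"

text \<open>Short exact sequence 0 -> A -f-> B -g-> C -> 0 (kernels/cokernels are pointwise).\<close>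
definition short_exact :: "'p set \<Rightarrow> ('p,'k::field) pmor \<Rightarrow> ('p,'k) pmor \<Rightarrow> bool" where
"short_exact X f g \<longleftrightarrow> (\<forall>p\<in>X.
   mat_ker (f p) = {0\<^sub>v (dim_col (f p))} \<and> mat_img (f p) = mat_ker (g p) \<and>
   mat_img (g p) = carrier_vec (dim_row (g p)))"

definition convex_in :: "'p set \<Rightarrow> ('p \<Rightarrow> 'p \<Rightarrow> bool) \<Rightarrow> 'p set \<Rightarrow> bool" where
"convex_in X lr S \<longleftrightarrow> (\<forall>s\<in>S. \<forall>s'\<in>S. \<forall>p\<in>X. lr s p \<and> lr p s' \<longrightarrow> p \<in> S)"

definition connected_in :: "('p \<Rightarrow> 'p \<Rightarrow> bool) \<Rightarrow> 'p set \<Rightarrow> bool" where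
"connected_in lr S \<longleftrightarrow> S \<noteq> {} \<and>
  (\<forall>s\<in>S. \<forall>t\<in>S. (\<lambda>x y. x \<in> S \<and> y \<in> S \<and> (lr x y \<or> lr y x))\<^sup>*\<^sup>* s t)"

definition spread :: "'p set \<Rightarrow> ('p \<Rightarrow> 'p \<Rightarrow> bool) \<Rightarrow> 'p set \<Rightarrow> bool" where
"spread X lr S \<longleftrightarrow> S \<subseteq> X \<and> convex_in X lr S \<and> connected_in lr S"

definition is_iso :: "'p set \<Rightarrow> ('p \<Rightarrow> 'p \<Rightarrow> bool) \<Rightarrow> ('p,'k::field) prep \<Rightarrow> ('p,'k) prep
    \<Rightarrow> ('p,'k) pmor \<Rightarrow> bool" where
"is_iso X lr A B u \<longleftrightarrow> is_mor X lr A B u \<and>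
  (\<exists>v. is_mor X lr B A v \<and> comp_mor v u = id_mor X A \<and> comp_mor u v = id_mor X B)"

definition spread_summand :: "'p set \<Rightarrow> ('p \<Rightarrow> 'p \<Rightarrow> bool) \<Rightarrow> ('p,'k::field) prep \<Rightarrow> bool" where
"spread_summand X lr C \<longleftrightarrow> is_fp X lr C \<and>
  (\<exists>C' Ss u. is_fp X lr C' \<and>
     (\<forall>S\<in>set Ss. spread X lr S \<and> is_fp X lr (indicator_rep lr S :: ('p,'k) prep)) \<and>
     is_iso X lr (dsum C C') (dsum_list (map (indicator_rep lr) Ss)) u)"

definition spread_approx :: "'p set \<Rightarrow> ('p \<Rightarrow> 'p \<Rightarrow> bool) \<Rightarrow> ('p,'k::field) prep
    \<Rightarrow> ('p,'k) prep \<Rightarrow> ('p,'k) pmor \<Rightarrow> bool" where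
"spread_approx X lr C M f \<longleftrightarrow> is_fp X lr M \<and> spread_summand X lr C \<and> is_mor X lr C M f \<and>
  (\<forall>S g. spread X lr S \<and> is_fp X lr (indicator_rep lr S :: ('p,'k) prep) \<and>
         is_mor X lr (indicator_rep lr S) M g \<longrightarrow>
         (\<exists>h. is_mor X lr (indicator_rep lr S) C h \<and> comp_mor f h = g))"

definition is_functor :: "'p set \<Rightarrow> ('p \<Rightarrow> 'p \<Rightarrow> bool) \<Rightarrow> 'q set \<Rightarrow> ('q \<Rightarrow> 'q \<Rightarrow> bool)
   \<Rightarrow> (('p,'k::field) prep \<Rightarrow> ('q,'k) prep)
   \<Rightarrow> (('p,'k) prep \<Rightarrow> ('p,'k) prep \<Rightarrow> ('p,'k) pmor \<Rightarrow> ('q,'k) pmor) \<Rightarrow> bool" where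
"is_functor X1 lr1 X2 lr2 Fo Fm \<longleftrightarrow>
  (\<forall>M. is_fp X1 lr1 M \<longrightarrow> is_fp X2 lr2 (Fo M)) \<and>
  (\<forall>M N f. is_fp X1 lr1 M \<and> is_fp X1 lr1 N \<and> is_mor X1 lr1 M N f \<longrightarrow>
      is_mor X2 lr2 (Fo M) (Fo N) (Fm M N f)) \<and>
  (\<forall>M. is_fp X1 lr1 M \<longrightarrow> Fm M M (id_mor X1 M) = id_mor X2 (Fo M)) \<and>
  (\<forall>M N L f g. is_fp X1 lr1 M \<and> is_fp X1 lr1 N \<and> is_fp X1 lr1 L \<and>
      is_mor X1 lr1 M N f \<and> is_mor X1 lr1 N L g \<longrightarrow>
      Fm M L (comp_mor g f) = comp_mor (Fm N L g) (Fm M N f))"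

definition grid :: "'a::linorder set list \<Rightarrow> 'a list set" where
"grid Ps = {xs. length xs = length Ps \<and> (\<forall>j<length Ps. xs ! j \<in> Ps ! j)}"

definition grid_le :: "'a::linorder list \<Rightarrow> 'a list \<Rightarrow> bool" where
"grid_le xs ys \<longleftrightarrow> list_all2 (\<le>) xs ys"

definition grid_map :: "('b \<Rightarrow> 'a) list \<Rightarrow> 'b list \<Rightarrow> 'a list" where
"grid_map \<iota>s q = map (\<lambda>j. (\<iota>s ! j) (q ! j)) [0..<length \<iota>s]"

definition aligned_grid_inclusion :: "'b::linorder set list \<Rightarrow> 'a::linorder set list
    \<Rightarrow> ('b \<Rightarrow> 'a) list \<Rightarrow> bool" where
"aligned_grid_inclusion Qs Ps \<iota>s \<longleftrightarrow> length Qs = length Ps \<and> length \<iota>s = length Ps \<and>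
  (\<forall>j<length Ps. inj_on (\<iota>s ! j) (Qs ! j) \<and> (\<iota>s ! j) ` (Qs ! j) \<subseteq> Ps ! j \<and>
                 mono_on (Qs ! j) (\<iota>s ! j))"

definition res_obj :: "'q set \<Rightarrow> ('q \<Rightarrow> 'q \<Rightarrow> bool) \<Rightarrow> ('q \<Rightarrow> 'p) \<Rightarrow> ('p,'k::field) prep
    \<Rightarrow> ('q,'k) prep" where
"res_obj Xq lrq i N = (let d = (\<lambda>q. if q \<in> Xq then fst N (i q) else 0) in
   (d, \<lambda>q q'. if q \<in> Xq \<and> q' \<in> Xq \<and> lrq q q' then snd N (i q) (i q') else 0\<^sub>m (d q') (d q)))"

definition res_mor :: "'q set \<Rightarrow> ('q \<Rightarrow> 'p) \<Rightarrow> ('p,'k::field) pmor \<Rightarrow> ('q,'k) pmor" where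
"res_mor Xq i g = (\<lambda>q. if q \<in> Xq then g (i q) else 0\<^sub>m 0 0)"

definition left_adjoint_to_res :: "'q set \<Rightarrow> ('q \<Rightarrow> 'q \<Rightarrow> bool) \<Rightarrow> 'p set \<Rightarrow> ('p \<Rightarrow> 'p \<Rightarrow> bool)
   \<Rightarrow> ('q \<Rightarrow> 'p) \<Rightarrow> (('q,'k::field) prep \<Rightarrow> ('p,'k) prep)
   \<Rightarrow> (('q,'k) prep \<Rightarrow> ('q,'k) prep \<Rightarrow> ('q,'k) pmor \<Rightarrow> ('p,'k) pmor) \<Rightarrow> bool" where
"left_adjoint_to_res Xq lrq Xp lrp i Lo Lm \<longleftrightarrow>
  is_functor Xq lrq Xp lrp Lo Lm \<and>
  (\<exists>\<phi> :: ('q,'k) prep \<Rightarrow> ('p,'k) prep \<Rightarrow> ('p,'k) pmor \<Rightarrow> ('q,'k) pmor.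
    (\<forall>M N. is_fp Xq lrq M \<and> is_fp Xp lrp N \<longrightarrow>
       bij_betw (\<phi> M N) {g. is_mor Xp lrp (Lo M) N g} {f. is_mor Xq lrq M (res_obj Xq lrq i N) f}) \<and>
    (\<forall>M M' N a g. is_fp Xq lrq M \<and> is_fp Xq lrq M' \<and> is_fp Xp lrp N \<and>
       is_mor Xq lrq M' M a \<and> is_mor Xp lrp (Lo M) N g \<longrightarrow>
       \<phi> M' N (comp_mor g (Lm M' M a)) = comp_mor (\<phi> M N g) a) \<and>
    (\<forall>M N N' b g. is_fp Xq lrq M \<and> is_fp Xp lrp N \<and> is_fp Xp lrp N' \<and>
       is_mor Xp lrp N N' b \<and> is_mor Xp lrp (Lo M) N g \<longrightarrow>
       \<phi> M N' (comp_mor b g) = comp_mor (res_mor Xq i b) (\<phi> M N g)))"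

definition exact_functor :: "'q set \<Rightarrow> ('q \<Rightarrow> 'q \<Rightarrow> bool) \<Rightarrow> 'p set \<Rightarrow> ('p \<Rightarrow> 'p \<Rightarrow> bool)
   \<Rightarrow> (('q,'k::field) prep \<Rightarrow> ('p,'k) prep)
   \<Rightarrow> (('q,'k) prep \<Rightarrow> ('q,'k) prep \<Rightarrow> ('q,'k) pmor \<Rightarrow> ('p,'k) pmor) \<Rightarrow> bool" where
"exact_functor X1 lr1 X2 lr2 Fo Fm \<longleftrightarrow>
  (\<forall>A B C f g. is_fp X1 lr1 A \<and> is_fp X1 lr1 B \<and> is_fp X1 lr1 C \<and>
     is_mor X1 lr1 A B f \<and> is_mor X1 lr1 B C g \<and> short_exact X1 f g \<longrightarrow>
     short_exact X2 (Fm A B f) (Fm B C g))"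

definition fully_faithful :: "'q set \<Rightarrow> ('q \<Rightarrow> 'q \<Rightarrow> bool) \<Rightarrow> 'p set \<Rightarrow> ('p \<Rightarrow> 'p \<Rightarrow> bool)
   \<Rightarrow> (('q,'k::field) prep \<Rightarrow> ('p,'k) prep)
   \<Rightarrow> (('q,'k) prep \<Rightarrow> ('q,'k) prep \<Rightarrow> ('q,'k) pmor \<Rightarrow> ('p,'k) pmor) \<Rightarrow> bool" where
"fully_faithful X1 lr1 X2 lr2 Fo Fm \<longleftrightarrow>
  (\<forall>M N. is_fp X1 lr1 M \<and> is_fp X1 lr1 N \<longrightarrow>
     bij_betw (Fm M N) {f. is_mor X1 lr1 M N f} {g. is_mor X2 lr2 (Fo M) (Fo N) g})"

definition preserves_spread_approx :: "'q set \<Rightarrow> ('q \<Rightarrow> 'q \<Rightarrow> bool) \<Rightarrow> 'p set \<Rightarrow> ('p \<Rightarrow> 'p \<Rightarrow> bool)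
   \<Rightarrow> (('q,'k::field) prep \<Rightarrow> ('p,'k) prep)
   \<Rightarrow> (('q,'k) prep \<Rightarrow> ('q,'k) prep \<Rightarrow> ('q,'k) pmor \<Rightarrow> ('p,'k) pmor) \<Rightarrow> bool" where
"preserves_spread_approx X1 lr1 X2 lr2 Fo Fm \<longleftrightarrow>
  (\<forall>C M f. spread_approx X1 lr1 C M f \<longrightarrow> spread_approx X2 lr2 (Fo C) (Fo M) (Fm C M f))"

end

theory Submission
  imports Defs "Jordan_Normal_Form.Matrix_Kernel"
begin

lemma zero_rows: "A \<in> carrier_mat 0 n \<Longrightarrow> A = 0\<^sub>m 0 n"
  by (rule eq_matI) auto
lemma zero_cols: "A \<in> carrier_mat n 0 \<Longrightarrow> A = 0\<^sub>m n 0"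
  by (rule eq_matI) auto
lemma one_mat_zero[simp]: "1\<^sub>m 0 = 0\<^sub>m 0 0"
  by (rule eq_matI) auto
lemma mult_inner_zero:
  assumes "A \<in> carrier_mat n 0" "B \<in> carrier_mat 0 m"
  shows "A * B = 0\<^sub>m n m"
  apply (rule eq_matI) using assms by (auto simp: scalar_prod_def)

lemma is_repD:
  assumes "is_rep X lr M"
  shows "p \<notin> X \<Longrightarrow> fst M p = 0"
    "\<not> (p \<in> X \<and> q \<in> X \<and> lr p q) \<Longrightarrow> snd M p q = 0\<^sub>m (fst M q) (fst M p)"
    "p \<in> X \<Longrightarrow> q \<in> X \<Longrightarrow> lr p q \<Longrightarrow> snd M p q \<in> carrier_mat (fst M q) (fst M p)"
    "p \<in> X \<Longrightarrow> snd M p p = 1\<^sub>m (fst M p)"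
    "p \<in> X \<Longrightarrow> q \<in> X \<Longrightarrow> s \<in> X \<Longrightarrow> lr p q \<Longrightarrow> lr q s \<Longrightarrow> snd M p s = snd M q s * snd M p q"
  using assms unfolding is_rep_def by blast+

lemma is_rep_carrier:
  assumes "is_rep X lr M" shows "snd M p q \<in> carrier_mat (fst M q) (fst M p)"
  using is_repD[OF assms] by (cases "p \<in> X \<and> q \<in> X \<and> lr p q") auto

lemma is_morD:
  assumes "is_mor X lr M N f"
  shows "is_rep X lr M" "is_rep X lr N" "p \<notin> X \<Longrightarrow> f p = 0\<^sub>m (fst N p) (fst M p)"
    "p \<in> X \<Longrightarrow> f p \<in> carrier_mat (fst N p) (fst M p)"
    "p \<in> X \<Longrightarrow> q \<in> X \<Longrightarrow> lr p q \<Longrightarrow> f q * snd M p q = snd N p q * f p"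
  using assms unfolding is_mor_def by blast+

lemma is_mor_carrier:
  assumes "is_mor X lr M N f" shows "f p \<in> carrier_mat (fst N p) (fst M p)"
  using is_morD[OF assms] by (cases "p \<in> X") auto

lemma is_morI:
  assumes "is_rep X lr M" "is_rep X lr N" "\<And>p. p \<notin> X \<Longrightarrow> f p = 0\<^sub>m (fst N p) (fst M p)"
    "\<And>p. p \<in> X \<Longrightarrow> f p \<in> carrier_mat (fst N p) (fst M p)"
    "\<And>p q. p \<in> X \<Longrightarrow> q \<in> X \<Longrightarrow> lr p q \<Longrightarrow> f q * snd M p q = snd N p q * f p"
  shows "is_mor X lr M N f"
  using assms unfolding is_mor_def by blast

lemma is_mor_comp:
  assumes f: "is_mor X lr M N f" and g: "is_mor X lr N L g"
  shows "is_mor X lr M L (comp_mor g f)"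
proof (rule is_morI)
  show "is_rep X lr M" "is_rep X lr L" using is_morD f g by blast+
  fix p assume "p \<notin> X"
  then show "comp_mor g f p = 0\<^sub>m (fst L p) (fst M p)"
    using is_morD(3)[OF f] is_morD(3)[OF g] is_repD(1)[OF is_morD(2)[OF f]]
    by (simp add: comp_mor_def)
next
  fix p assume "p \<in> X" then show "comp_mor g f p \<in> carrier_mat (fst L p) (fst M p)"
    using is_mor_carrier[OF f] is_mor_carrier[OF g] by (metis comp_mor_def mult_carrier_mat)
next
  fix p q assume pq: "p \<in> X" "q \<in> X" "lr p q"
  have c1: "f p \<in> carrier_mat (fst N p) (fst M p)" "f q \<in> carrier_mat (fst N q) (fst M q)"
    "g p \<in> carrier_mat (fst L p) (fst N p)" "g q \<in> carrier_mat (fst L q) (fst N q)"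
    using is_mor_carrier[OF f] is_mor_carrier[OF g] by blast+
  have c2: "snd M p q \<in> carrier_mat (fst M q) (fst M p)" "snd N p q \<in> carrier_mat (fst N q) (fst N p)"
    "snd L p q \<in> carrier_mat (fst L q) (fst L p)"
    using is_rep_carrier[OF is_morD(1)[OF f]] is_rep_carrier[OF is_morD(2)[OF f]] is_rep_carrier[OF is_morD(2)[OF g]] by blast+
  have "g q * f q * snd M p q = g q * (f q * snd M p q)" using c1 c2 by (metis assoc_mult_mat)
  also have "\<dots> = g q * (snd N p q * f p)" using is_morD(5)[OF f pq] by simp
  also have "\<dots> = (g q * snd N p q) * f p" using c1 c2 by (metis assoc_mult_mat)
  also have "\<dots> = (snd L p q * g p) * f p" using is_morD(5)[OF g pq] by simp
  also have "\<dots> = snd L p q * (g p * f p)" using c1 c2 by (metis assoc_mult_mat)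
  finally show "comp_mor g f q * snd M p q = snd L p q * comp_mor g f p"
    by (simp add: comp_mor_def)
qed

lemma comp_mor_assoc:
  assumes f: "is_mor X lr M N f" and g: "is_mor X lr N L g" and h: "is_mor X lr L K h"
  shows "comp_mor h (comp_mor g f) = comp_mor (comp_mor h g) f"
  unfolding comp_mor_def
  using is_mor_carrier[OF f] is_mor_carrier[OF g] is_mor_carrier[OF h]
  by (intro ext) (metis assoc_mult_mat)

lemma is_mor_id:
  assumes "is_rep X lr M" shows "is_mor X lr M M (id_mor X M)"
  apply (rule is_morI[OF assms assms])
  using is_repD[OF assms] is_rep_carrier[OF assms]
  by (auto simp: id_mor_def) (metis left_mult_one_mat right_mult_one_mat)

lemma carrier_vec_0: "carrier_vec 0 = {0\<^sub>v 0}"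
  by (auto intro!: eq_vecI)
lemma mat_img_00: "mat_img (0\<^sub>m 0 0 :: 'k::field mat) = carrier_vec 0"
  unfolding mat_img_def carrier_vec_0 by (auto intro!: eq_vecI exI[of _ "0\<^sub>v 0"])
lemma mat_ker_00: "mat_ker (0\<^sub>m 0 0 :: 'k::field mat) = carrier_vec 0"
  unfolding mat_ker_def by (auto intro!: eq_vecI)

lemma res_fst: "fst (res_obj D lr \<phi> M) p = (if p \<in> D then fst M (\<phi> p) else 0)"
  by (simp add: res_obj_def Let_def)
lemma res_snd: "snd (res_obj D lr \<phi> M) p q = (if p \<in> D \<and> q \<in> D \<and> lr p q then snd M (\<phi> p) (\<phi> q)
   else 0\<^sub>m (fst (res_obj D lr \<phi> M) q) (fst (res_obj D lr \<phi> M) p))"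
  by (simp add: res_obj_def Let_def)
lemma res_mor_app: "res_mor D \<phi> f p = (if p \<in> D then f (\<phi> p) else 0\<^sub>m 0 0)"
  by (simp add: res_mor_def)

locale resfun =
  fixes X1 :: "'p set" and lr1 and D and \<phi> :: "'p \<Rightarrow> 'q" and X2 :: "'q set" and lr2
  assumes D1: "D \<subseteq> X1" and up: "\<And>p p'. p \<in> D \<Longrightarrow> p' \<in> X1 \<Longrightarrow> lr1 p p' \<Longrightarrow> p' \<in> D"
    and phi: "\<And>p. p \<in> D \<Longrightarrow> \<phi> p \<in> X2"
    and mono: "\<And>p p'. p \<in> D \<Longrightarrow> p' \<in> D \<Longrightarrow> lr1 p p' \<Longrightarrow> lr2 (\<phi> p) (\<phi> p')"
    and rf: "\<And>p. p \<in> X1 \<Longrightarrow> lr1 p p"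
    and tr: "\<And>p q s. p \<in> X1 \<Longrightarrow> q \<in> X1 \<Longrightarrow> s \<in> X1 \<Longrightarrow> lr1 p q \<Longrightarrow> lr1 q s \<Longrightarrow> lr1 p s"
begin

abbreviation "R M \<equiv> res_obj D lr1 \<phi> M"
abbreviation "Rm f \<equiv> res_mor D \<phi> f"

lemma R_carrier:
  assumes "is_rep X2 lr2 M"
  shows "snd (R M) p q \<in> carrier_mat (fst (R M) q) (fst (R M) p)"
  using is_rep_carrier[OF assms] by (simp add: res_snd res_fst)

lemma R_rep:
  assumes M: "is_rep X2 lr2 M"
  shows "is_rep X1 lr1 (R M)"
  unfolding is_rep_def
proof (intro conjI allI impI ballI)
  fix p assume "p \<notin> X1" then show "fst (R M) p = 0" using D1 by (auto simp: res_fst)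
next
  fix p q assume "\<not> (p \<in> X1 \<and> q \<in> X1 \<and> lr1 p q)"
  then show "snd (R M) p q = 0\<^sub>m (fst (R M) q) (fst (R M) p)"
    using D1 by (auto simp: res_snd)
next
  fix p q assume "p \<in> X1" "q \<in> X1" "lr1 p q"
  then show "snd (R M) p q \<in> carrier_mat (fst (R M) q) (fst (R M) p)"
    using R_carrier[OF M] by blast
next
  fix p assume p: "p \<in> X1"
  show "snd (R M) p p = 1\<^sub>m (fst (R M) p)"
  proof (cases "p \<in> D")
    case True
    then show ?thesis using rf[OF p] phi is_repD(4)[OF M] by (simp add: res_snd res_fst)
  qed (simp add: res_snd res_fst)
next
  fix p q s assume pqs: "p \<in> X1" "q \<in> X1" "s \<in> X1" "lr1 p q \<and> lr1 q s"
  show "snd (R M) p s = snd (R M) q s * snd (R M) p q"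
  proof (cases "p \<in> D")
    case True
    then have "q \<in> D" "s \<in> D" "lr1 p s" using up pqs tr by blast+
    then show ?thesis using True pqs phi mono is_repD(5)[OF M, of "\<phi> p" "\<phi> q" "\<phi> s"]
      by (simp add: res_snd)
  next
    case False
    have "snd (R M) q s * snd (R M) p q \<in> carrier_mat (fst (R M) s) 0"
      using R_carrier[OF M, of q s] R_carrier[OF M, of p q] False
      by (metis mult_carrier_mat res_fst)
    then have 1: "snd (R M) q s * snd (R M) p q = 0\<^sub>m (fst (R M) s) 0" by (rule zero_cols)
    have 2: "snd (R M) p s = 0\<^sub>m (fst (R M) s) 0" using False by (simp add: res_snd res_fst)
    show ?thesis using 1 2 by simp
  qed
qed

lemma R_mor:
  assumes f: "is_mor X2 lr2 M N f"
  shows "is_mor X1 lr1 (R M) (R N) (Rm f)"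
proof (rule is_morI)
  show "is_rep X1 lr1 (R M)" "is_rep X1 lr1 (R N)" using R_rep is_morD(1,2)[OF f] by blast+
  fix p assume "p \<notin> X1" then show "Rm f p = 0\<^sub>m (fst (R N) p) (fst (R M) p)"
    using D1 by (auto simp: res_mor_app res_fst)
next
  fix p assume "p \<in> X1" then show "Rm f p \<in> carrier_mat (fst (R N) p) (fst (R M) p)"
    using is_mor_carrier[OF f] by (simp add: res_mor_app res_fst)
next
  fix p q assume pq: "p \<in> X1" "q \<in> X1" "lr1 p q"
  show "Rm f q * snd (R M) p q = snd (R N) p q * Rm f p"
  proof (cases "p \<in> D")
    case True
    then have "q \<in> D" using up pq by blast
    then show ?thesis using True pq phi mono is_morD(5)[OF f, of "\<phi> p" "\<phi> q"]
      by (simp add: res_snd res_mor_app)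
  next
    case False
    have c1: "Rm f q \<in> carrier_mat (fst (R N) q) (fst (R M) q)"
      using is_mor_carrier[OF f, of "\<phi> q"] by (simp add: res_mor_app res_fst)
    have c2: "snd (R M) p q \<in> carrier_mat (fst (R M) q) 0"
      using R_carrier[OF is_morD(1)[OF f], of p q] False by (simp add: res_fst)
    have 1: "Rm f q * snd (R M) p q = 0\<^sub>m (fst (R N) q) 0"
      by (rule zero_cols) (rule mult_carrier_mat[OF c1 c2])
    have 2: "snd (R N) p q * Rm f p = 0\<^sub>m (fst (R N) q) 0"
      apply (rule zero_cols) using R_carrier[OF is_morD(2)[OF f], of p q] False
      by (simp add: res_mor_app res_fst)
    show ?thesis using 1 2 by simp
  qed
qed

lemma R_id:
  assumes M: "is_rep X2 lr2 M"
  shows "Rm (id_mor X2 M) = id_mor X1 (R M)"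
  by (rule ext) (use D1 phi in \<open>auto simp: res_mor_app id_mor_def res_fst\<close>)

lemma R_comp: "Rm (comp_mor g f) = comp_mor (Rm g) (Rm f)"
  by (auto simp: res_mor_app comp_mor_def)

lemma R_dsum: "R (dsum M N) = dsum (R M) (R N)"
proof (rule prod_eqI)
  show "fst (R (dsum M N)) = fst (dsum (R M) (R N))"
    by (rule ext) (simp add: res_fst dsum_def)
  show "snd (R (dsum M N)) = snd (dsum (R M) (R N))"
  proof (intro ext)
    fix p q
    show "snd (R (dsum M N)) p q = snd (dsum (R M) (R N)) p q"
    proof (cases "p \<in> D \<and> q \<in> D \<and> lr1 p q")
      case True then show ?thesis by (simp add: res_snd res_fst dsum_def)
    next
      case False
      then have "snd (R (dsum M N)) p q = 0\<^sub>m (fst (R M) q + fst (R N) q) (fst (R M) p + fst (R N) p)"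
        by (simp add: res_snd res_fst dsum_def)
      moreover have "snd (dsum (R M) (R N)) p q = 0\<^sub>m (fst (R M) q + fst (R N) q) (fst (R M) p + fst (R N) p)"
        using False unfolding dsum_def snd_conv res_snd[of _ _ _ M] res_snd[of _ _ _ N] if_not_P[OF False]
        by (simp only: four_block_zero_mat)
      ultimately show ?thesis by simp
    qed
  qed
qed

lemma R_zero: "R zero_rep = zero_rep"
  unfolding zero_rep_def by (auto simp: res_obj_def Let_def intro!: ext)

lemma R_dsum_list: "R (dsum_list Ms) = dsum_list (map R Ms)"
  unfolding dsum_list_def by (induct Ms) (auto simp: R_dsum R_zero)

lemma R_indicator: "R (indicator_rep lr2 S) = indicator_rep lr1 {p \<in> D. \<phi> p \<in> S}"
proof (rule prod_eqI)
  show "fst (R (indicator_rep lr2 S)) = fst (indicator_rep lr1 {p \<in> D. \<phi> p \<in> S})"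
    by (rule ext) (simp add: res_fst indicator_rep_def)
  show "snd (R (indicator_rep lr2 S)) = snd (indicator_rep lr1 {p \<in> D. \<phi> p \<in> S})"
  proof (intro ext)
    fix p q
    show "snd (R (indicator_rep lr2 S)) p q = snd (indicator_rep lr1 {p \<in> D. \<phi> p \<in> S}) p q"
      using mono[of p q] by (simp add: res_snd res_fst indicator_rep_def)
  qed
qed

lemma R_short_exact:
  assumes "short_exact X2 f g"
  shows "short_exact X1 (Rm f) (Rm g)"
  unfolding short_exact_def
proof
  fix p assume p: "p \<in> X1"
  show "mat_ker (Rm f p) = {0\<^sub>v (dim_col (Rm f p))} \<and> mat_img (Rm f p) = mat_ker (Rm g p) \<and>
    mat_img (Rm g p) = carrier_vec (dim_row (Rm g p))"
  proof (cases "p \<in> D")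
    case True
    then show ?thesis using assms phi[OF True] by (simp add: res_mor_app short_exact_def)
  next
    case False
    then show ?thesis by (simp add: res_mor_app mat_img_00 mat_ker_00 carrier_vec_0)
  qed
qed

lemma R_free:
  assumes psi: "\<And>a. a \<in> X2 \<Longrightarrow> {p \<in> D. \<phi> p \<in> upset X2 lr2 {a}} = upset X1 lr1 {\<psi> a}"
    and as: "set as \<subseteq> X2"
  shows "R (free_rep X2 lr2 as) = free_rep X1 lr1 (map \<psi> as)"
  unfolding free_rep_def R_dsum_list map_map
  by (rule arg_cong[where f=dsum_list], rule map_cong) (use as in \<open>auto simp: R_indicator psi\<close>)

lemma R_fp:
  assumes psi: "\<And>a. a \<in> X2 \<Longrightarrow> {p \<in> D. \<phi> p \<in> upset X2 lr2 {a}} = upset X1 lr1 {\<psi> a}"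
    and psiX: "\<And>a. a \<in> X2 \<Longrightarrow> \<psi> a \<in> X1"
    and fp: "is_fp X2 lr2 M"
  shows "is_fp X1 lr1 (R M)"
proof -
  from fp obtain as bs h e where as: "set as \<subseteq> X2" and bs: "set bs \<subseteq> X2"
    and h: "is_mor X2 lr2 (free_rep X2 lr2 as) (free_rep X2 lr2 bs) h"
    and e: "is_mor X2 lr2 (free_rep X2 lr2 bs) M e"
    and ex: "\<forall>p\<in>X2. mat_img (h p) = mat_ker (e p) \<and> mat_img (e p) = carrier_vec (fst M p)"
    unfolding is_fp_def by blast
  have M: "is_rep X2 lr2 M" using fp unfolding is_fp_def by blast
  show ?thesis unfolding is_fp_def
  proof (intro conjI exI)
    show "is_rep X1 lr1 (R M)" by (rule R_rep[OF M])
    show "set (map \<psi> as) \<subseteq> X1" "set (map \<psi> bs) \<subseteq> X1" using as bs psiX by auto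
    show "is_mor X1 lr1 (free_rep X1 lr1 (map \<psi> as)) (free_rep X1 lr1 (map \<psi> bs)) (Rm h)"
      proof -
        have 1: "R (free_rep X2 lr2 as) = free_rep X1 lr1 (map \<psi> as)" by (rule R_free[OF psi as])
        have 2: "R (free_rep X2 lr2 bs) = free_rep X1 lr1 (map \<psi> bs)" by (rule R_free[OF psi bs])
        show ?thesis using R_mor[OF h] by (simp only: 1 2)
      qed
    show "is_mor X1 lr1 (free_rep X1 lr1 (map \<psi> bs)) (R M) (Rm e)"
      proof -
        have 2: "R (free_rep X2 lr2 bs) = free_rep X1 lr1 (map \<psi> bs)" by (rule R_free[OF psi bs])
        show ?thesis using R_mor[OF e] by (simp only: 2)
      qed
    show "\<forall>p\<in>X1. mat_img (Rm h p) = mat_ker (Rm e p) \<and> mat_img (Rm e p) = carrier_vec (fst (R M) p)"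
    proof
      fix p assume p: "p \<in> X1"
      show "mat_img (Rm h p) = mat_ker (Rm e p) \<and> mat_img (Rm e p) = carrier_vec (fst (R M) p)"
      proof (cases "p \<in> D")
        case True
        then show ?thesis using ex phi[OF True] by (simp add: res_mor_app res_fst)
      next
        case False
        then show ?thesis by (simp add: res_mor_app res_fst mat_img_00 mat_ker_00)
      qed
    qed
  qed
qed

end

lemma grid_le_iff: "grid_le xs ys \<longleftrightarrow> length xs = length ys \<and> (\<forall>j<length xs. xs ! j \<le> ys ! j)"
  unfolding grid_le_def by (simp add: list_all2_conv_all_nth)

lemma grid_le_refl: "grid_le xs xs" by (simp add: grid_le_iff)
lemma grid_le_trans: "grid_le xs ys \<Longrightarrow> grid_le ys zs \<Longrightarrow> grid_le xs zs"
  unfolding grid_le_iff by (metis order_trans)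
lemma grid_le_antisym: "grid_le xs ys \<Longrightarrow> grid_le ys xs \<Longrightarrow> xs = ys"
  unfolding grid_le_iff by (metis nth_equalityI order_antisym)

lemma mem_grid: "xs \<in> grid Ps \<longleftrightarrow> length xs = length Ps \<and> (\<forall>j<length Ps. xs ! j \<in> Ps ! j)"
  by (simp add: grid_def)

definition gjoin :: "'a::linorder list \<Rightarrow> 'a list \<Rightarrow> 'a list" where
  "gjoin xs ys = map (\<lambda>(x,y). max x y) (zip xs ys)"

lemma gjoin_len[simp]: "length (gjoin xs ys) = min (length xs) (length ys)"
  by (simp add: gjoin_def)
lemma gjoin_nth: "j < length xs \<Longrightarrow> j < length ys \<Longrightarrow> gjoin xs ys ! j = max (xs ! j) (ys ! j)"
  by (simp add: gjoin_def)
lemma gjoin_grid: "xs \<in> grid Ps \<Longrightarrow> ys \<in> grid Ps \<Longrightarrow> gjoin xs ys \<in> grid Ps"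
  unfolding mem_grid by (auto simp: gjoin_nth max_def)
lemma gjoin_ge1: "length xs = length ys \<Longrightarrow> grid_le xs (gjoin xs ys)"
  by (simp add: grid_le_iff gjoin_nth)
lemma gjoin_ge2: "length xs = length ys \<Longrightarrow> grid_le ys (gjoin xs ys)"
  by (simp add: grid_le_iff gjoin_nth)
lemma gjoin_le_eq: "grid_le xs ys \<Longrightarrow> gjoin xs ys = ys"
  by (rule nth_equalityI) (auto simp: grid_le_iff gjoin_nth max_def)

locale gridinc =
  fixes Ps :: "'a::linorder set list" and Qs :: "'b::linorder set list" and \<iota>s :: "('b \<Rightarrow> 'a) list"
  assumes agi: "aligned_grid_inclusion Qs Ps \<iota>s"
    and fin: "\<forall>j<length Qs. finite (Qs ! j)"
begin

abbreviation "n \<equiv> length Ps"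
abbreviation "XP \<equiv> grid Ps"
abbreviation "XQ \<equiv> grid Qs"
abbreviation "iota \<equiv> grid_map \<iota>s"

lemma lenQ: "length Qs = n" and lenI: "length \<iota>s = n"
  using agi unfolding aligned_grid_inclusion_def by auto

lemma iinj: "j < n \<Longrightarrow> inj_on (\<iota>s ! j) (Qs ! j)"
  and iimg: "j < n \<Longrightarrow> a \<in> Qs ! j \<Longrightarrow> (\<iota>s ! j) a \<in> Ps ! j"
  and imono: "j < n \<Longrightarrow> a \<in> Qs ! j \<Longrightarrow> b \<in> Qs ! j \<Longrightarrow> a \<le> b \<Longrightarrow> (\<iota>s ! j) a \<le> (\<iota>s ! j) b"
  using agi unfolding aligned_grid_inclusion_def mono_on_def by auto

lemma finj: "j < n \<Longrightarrow> finite (Qs ! j)" using fin lenQ by auto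

lemma ile_iff: "j < n \<Longrightarrow> a \<in> Qs ! j \<Longrightarrow> b \<in> Qs ! j \<Longrightarrow> (\<iota>s ! j) a \<le> (\<iota>s ! j) b \<longleftrightarrow> a \<le> b"
proof
  assume j: "j < n" and a: "a \<in> Qs ! j" and b: "b \<in> Qs ! j" and le: "(\<iota>s ! j) a \<le> (\<iota>s ! j) b"
  show "a \<le> b"
  proof (rule ccontr)
    assume "\<not> a \<le> b"
    then have "b \<le> a" by simp
    then have "(\<iota>s ! j) b \<le> (\<iota>s ! j) a" using imono[OF j b a] by blast
    then have "(\<iota>s ! j) a = (\<iota>s ! j) b" using le by simp
    then have "a = b" using iinj[OF j] a b by (simp add: inj_on_eq_iff)
    then show False using \<open>\<not> a \<le> b\<close> by simp
  qed
qed (rule imono)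

definition flj :: "nat \<Rightarrow> 'a \<Rightarrow> 'b" where
  "flj j x = Max {a \<in> Qs ! j. (\<iota>s ! j) a \<le> x}"

definition DD :: "'a list set" where
  "DD = {p \<in> grid Ps. \<forall>j<n. \<exists>a\<in>Qs ! j. (\<iota>s ! j) a \<le> p ! j}"

definition flo :: "'a list \<Rightarrow> 'b list" where
  "flo p = map (\<lambda>j. flj j (p ! j)) [0..<n]"

lemma flj_props:
  assumes j: "j < n" and ex: "\<exists>a\<in>Qs ! j. (\<iota>s ! j) a \<le> x"
  shows "flj j x \<in> Qs ! j" "(\<iota>s ! j) (flj j x) \<le> x"
    "a \<in> Qs ! j \<Longrightarrow> (\<iota>s ! j) a \<le> x \<longleftrightarrow> a \<le> flj j x"
proof -
  let ?S = "{a \<in> Qs ! j. (\<iota>s ! j) a \<le> x}"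
  have fS: "finite ?S" using finj[OF j] by auto
  have nS: "?S \<noteq> {}" using ex by auto
  have "flj j x \<in> ?S" unfolding flj_def using Max_in[OF fS nS] .
  then show 1: "flj j x \<in> Qs ! j" "(\<iota>s ! j) (flj j x) \<le> x" by auto
  assume a: "a \<in> Qs ! j"
  show "(\<iota>s ! j) a \<le> x \<longleftrightarrow> a \<le> flj j x"
  proof
    assume "(\<iota>s ! j) a \<le> x" then show "a \<le> flj j x" unfolding flj_def using fS a by auto
  next
    assume "a \<le> flj j x"
    then have "(\<iota>s ! j) a \<le> (\<iota>s ! j) (flj j x)" using imono[OF j a 1(1)] by blast
    then show "(\<iota>s ! j) a \<le> x" using 1(2) by order
  qed
qed

lemma flj_mono:
  assumes j: "j < n" and ex: "\<exists>a\<in>Qs ! j. (\<iota>s ! j) a \<le> x" and xy: "x \<le> y"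
  shows "flj j x \<le> flj j y"
proof -
  have ey: "\<exists>a\<in>Qs ! j. (\<iota>s ! j) a \<le> y" using ex xy by (meson order_trans)
  show ?thesis using flj_props[OF j ex] flj_props[OF j ey] xy by (meson order_trans)
qed

lemma flj_max:
  assumes j: "j < n" and ex: "\<exists>a\<in>Qs ! j. (\<iota>s ! j) a \<le> x" and ey: "\<exists>a\<in>Qs ! j. (\<iota>s ! j) a \<le> y"
  shows "flj j (max x y) = max (flj j x) (flj j y)"
  using flj_mono[OF j ex, of y] flj_mono[OF j ey, of x] by (auto simp: max_def)

lemma flj_iota: assumes j: "j < n" and a: "a \<in> Qs ! j" shows "flj j ((\<iota>s ! j) a) = a"
proof -
  have ex: "\<exists>aa\<in>Qs ! j. (\<iota>s ! j) aa \<le> (\<iota>s ! j) a" using a by blast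
  note fp = flj_props[OF j ex]
  have 1: "flj j ((\<iota>s ! j) a) \<le> a" using fp(1,2) ile_iff[OF j fp(1) a] by blast
  have 2: "a \<le> flj j ((\<iota>s ! j) a)" using fp(3)[OF a] by simp
  show ?thesis using 1 2 by simp
qed

lemma iota_len[simp]: "length (iota q) = n"
  by (simp add: grid_map_def lenI)
lemma iota_nth: "j < n \<Longrightarrow> iota q ! j = (\<iota>s ! j) (q ! j)"
  by (simp add: grid_map_def lenI)
lemma flo_len[simp]: "length (flo p) = n" by (simp add: flo_def)
lemma flo_nth: "j < n \<Longrightarrow> flo p ! j = flj j (p ! j)" by (simp add: flo_def)

lemma memQ: "q \<in> XQ \<longleftrightarrow> length q = n \<and> (\<forall>j<n. q ! j \<in> Qs ! j)"
  by (simp add: grid_def lenQ)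

lemma DD_sub: "DD \<subseteq> XP" by (auto simp: DD_def)

lemma iota_DD: "q \<in> XQ \<Longrightarrow> iota q \<in> DD"
  unfolding DD_def mem_grid memQ lenQ by (auto simp: iota_nth iimg)

lemma iota_XP: "q \<in> XQ \<Longrightarrow> iota q \<in> XP" using iota_DD DD_sub by blast

lemma DDD: "p \<in> DD \<Longrightarrow> j < n \<Longrightarrow> \<exists>a\<in>Qs ! j. (\<iota>s ! j) a \<le> p ! j"
  by (auto simp: DD_def)

lemma flo_XQ: "p \<in> DD \<Longrightarrow> flo p \<in> XQ"
  unfolding memQ using DDD flj_props(1) by (auto simp: flo_nth)

lemma galois:
  assumes p: "p \<in> DD" and q: "q \<in> XQ"
  shows "grid_le (iota q) p \<longleftrightarrow> grid_le q (flo p)"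
proof -
  have lp: "length p = n" using p DD_sub mem_grid by blast
  have lq: "length q = n" using q memQ by blast
  show ?thesis unfolding grid_le_iff using lp lq flj_props(3)[OF _ DDD[OF p]] q
    by (auto simp: iota_nth flo_nth memQ)
qed

lemma flo_iota: "q \<in> XQ \<Longrightarrow> flo (iota q) = q"
  by (rule nth_equalityI) (auto simp: memQ flo_nth iota_nth flj_iota)

lemma iota_mono: "q \<in> XQ \<Longrightarrow> q' \<in> XQ \<Longrightarrow> grid_le q q' \<Longrightarrow> grid_le (iota q) (iota q')"
  unfolding grid_le_iff memQ by (auto simp: iota_nth imono)

lemma iota_le_iff: "q \<in> XQ \<Longrightarrow> q' \<in> XQ \<Longrightarrow> grid_le (iota q) (iota q') \<longleftrightarrow> grid_le q q'"
  unfolding grid_le_iff memQ by (auto simp: iota_nth ile_iff)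

lemma flo_mono: assumes "p \<in> DD" "p' \<in> DD" "grid_le p p'" shows "grid_le (flo p) (flo p')"
proof -
  have l: "length p' = n" using assms DD_sub mem_grid by blast
  show ?thesis using assms l unfolding grid_le_iff by (auto simp: flo_nth intro!: flj_mono DDD)
qed

lemma DD_up: "p \<in> DD \<Longrightarrow> p' \<in> XP \<Longrightarrow> grid_le p p' \<Longrightarrow> p' \<in> DD"
  unfolding DD_def grid_le_iff by (auto simp: mem_grid) (meson order_trans)

lemma iota_flo_le: "p \<in> DD \<Longrightarrow> grid_le (iota (flo p)) p"
  using galois[OF _ flo_XQ] grid_le_refl by blast

lemma flo_gjoin:
  assumes "p \<in> DD" "p' \<in> DD"
  shows "flo (gjoin p p') = gjoin (flo p) (flo p')"
proof -
  have l: "length p = n" "length p' = n" using assms DD_sub mem_grid by blast+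
  show ?thesis
  proof (rule nth_equalityI)
    show "length (flo (gjoin p p')) = length (gjoin (flo p) (flo p'))" by simp
    fix j assume "j < length (flo (gjoin p p'))"
    then have j: "j < n" by simp
    have "flo (gjoin p p') ! j = flj j (max (p ! j) (p' ! j))"
      using j l by (simp add: flo_nth gjoin_nth)
    also have "\<dots> = max (flj j (p ! j)) (flj j (p' ! j))"
      by (rule flj_max[OF j DDD[OF assms(1) j] DDD[OF assms(2) j]])
    also have "\<dots> = gjoin (flo p) (flo p') ! j" using j by (simp add: flo_nth gjoin_nth)
    finally show "flo (gjoin p p') ! j = gjoin (flo p) (flo p') ! j" .
  qed
qed

lemma gjoin_DD: assumes "p \<in> DD" "p' \<in> XP" shows "gjoin p p' \<in> DD"
proof -
  have p: "p \<in> XP" using assms DD_sub by blast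
  then have l: "length p = length p'" using assms mem_grid by metis
  show ?thesis by (rule DD_up[OF assms(1) gjoin_grid[OF p assms(2)] gjoin_ge1[OF l]])
qed

lemma flo_gjoin_iota:
  assumes "p \<in> DD" "q' \<in> XQ" "grid_le (flo p) q'"
  shows "flo (gjoin p (iota q')) = q'"
  using flo_gjoin[OF assms(1) iota_DD[OF assms(2)]] flo_iota[OF assms(2)] gjoin_le_eq[OF assms(3)]
  by simp

lemma XQ_finite: "finite XQ"
proof -
  have "XQ \<subseteq> {xs. set xs \<subseteq> (\<Union>j<n. Qs ! j) \<and> length xs = n}"
    using memQ by (auto simp: in_set_conv_nth) (metis lessThan_iff)
  moreover have "finite {xs. set xs \<subseteq> (\<Union>j<n. Qs ! j) \<and> length xs = n}"
    by (rule finite_lists_length_eq) (use finj in auto)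
  ultimately show ?thesis by (rule finite_subset)
qed

lemma upset_pre: "a \<in> XQ \<Longrightarrow> {p \<in> DD. flo p \<in> upset XQ grid_le {a}} = upset XP grid_le {iota a}"
proof
  assume a: "a \<in> XQ"
  show "{p \<in> DD. flo p \<in> upset XQ grid_le {a}} \<subseteq> upset XP grid_le {iota a}"
    unfolding upset_def using galois[OF _ a] DD_sub by blast
  show "upset XP grid_le {iota a} \<subseteq> {p \<in> DD. flo p \<in> upset XQ grid_le {a}}"
  proof
    fix p assume "p \<in> upset XP grid_le {iota a}"
    then have p: "p \<in> XP" "grid_le (iota a) p" unfolding upset_def by auto
    have pD: "p \<in> DD" by (rule DD_up[OF iota_DD[OF a] p(1) p(2)])
    show "p \<in> {p \<in> DD. flo p \<in> upset XQ grid_le {a}}"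
      unfolding upset_def using pD flo_XQ[OF pD] galois[OF pD a] p(2) by blast
  qed
qed

end

sublocale gridinc \<subseteq> Lo: resfun XP grid_le DD flo XQ grid_le
proof
  show "DD \<subseteq> XP" by (rule DD_sub)
qed (auto simp: flo_XQ flo_mono grid_le_refl intro: DD_up grid_le_trans)

sublocale gridinc \<subseteq> Ri: resfun XQ grid_le XQ iota XP grid_le
proof
qed (auto simp: iota_XP iota_mono grid_le_refl intro: grid_le_trans)

context gridinc begin

lemma RiLo:
  assumes M: "is_rep XQ grid_le M"
  shows "Ri.R (Lo.R M) = M"
proof (rule prod_eqI)
  have f: "fst (Ri.R (Lo.R M)) = fst M"
  proof
    fix q show "fst (Ri.R (Lo.R M)) q = fst M q"
      using is_repD(1)[OF M, of q] iota_DD[of q] flo_iota[of q] by (simp add: res_fst)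
  qed
  then show "fst (Ri.R (Lo.R M)) = fst M" .
  show "snd (Ri.R (Lo.R M)) = snd M"
  proof (intro ext)
    fix q q'
    show "snd (Ri.R (Lo.R M)) q q' = snd M q q'"
    proof (cases "q \<in> XQ \<and> q' \<in> XQ \<and> grid_le q q'")
      case True
      then show ?thesis using iota_DD iota_mono flo_iota by (simp add: res_snd)
    next
      case False
      have "snd (Ri.R (Lo.R M)) q q' = 0\<^sub>m (fst (Ri.R (Lo.R M)) q') (fst (Ri.R (Lo.R M)) q)"
        using False by (simp only: res_snd[of XQ grid_le iota "Lo.R M" q q'] if_False)
      then show ?thesis using is_repD(2)[OF M False] f by simp
    qed
  qed
qed

lemma Lo_fp: "is_fp XQ grid_le M \<Longrightarrow> is_fp XP grid_le (Lo.R M)"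
  by (rule Lo.R_fp[OF upset_pre iota_XP])

lemma Lo_functor: "is_functor XQ grid_le XP grid_le Lo.R (\<lambda>M N f. Lo.Rm f)"
  unfolding is_functor_def
  using Lo_fp Lo.R_mor Lo.R_id Lo.R_comp is_fp_def by blast

definition adjinv :: "('a list, 'k::field) prep \<Rightarrow> ('b list, 'k) pmor \<Rightarrow> ('a list, 'k) pmor" where
  "adjinv N f = (\<lambda>p. if p \<in> DD then snd N (iota (flo p)) p * f (flo p) else 0\<^sub>m (fst N p) 0)"

lemma adjinv_mor:
  assumes M: "is_rep XQ grid_le M" and N: "is_rep XP grid_le N"
    and f: "is_mor XQ grid_le M (Ri.R N) f"
  shows "is_mor XP grid_le (Lo.R M) N (adjinv N f)"
proof (rule is_morI)
  show "is_rep XP grid_le (Lo.R M)" by (rule Lo.R_rep[OF M])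
  show "is_rep XP grid_le N" by (rule N)
next
  fix p assume p: "p \<notin> XP"
  then have "p \<notin> DD" using DD_sub by blast
  then show "adjinv N f p = 0\<^sub>m (fst N p) (fst (Lo.R M) p)"
    by (simp add: adjinv_def res_fst)
next
  fix p assume p: "p \<in> XP"
  show "adjinv N f p \<in> carrier_mat (fst N p) (fst (Lo.R M) p)"
  proof (cases "p \<in> DD")
    case True
    have "f (flo p) \<in> carrier_mat (fst N (iota (flo p))) (fst M (flo p))"
      using is_mor_carrier[OF f, of "flo p"] flo_XQ[OF True] by (simp add: res_fst)
    then show ?thesis using True is_rep_carrier[OF N, of "iota (flo p)" p]
      by (simp add: adjinv_def res_fst mult_carrier_mat)
  qed (simp add: adjinv_def res_fst)
next
  fix p q assume pq: "p \<in> XP" "q \<in> XP" "grid_le p q"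
  show "adjinv N f q * snd (Lo.R M) p q = snd N p q * adjinv N f p"
  proof (cases "p \<in> DD")
    case True
    then have qD: "q \<in> DD" using DD_up pq by blast
    have fp: "flo p \<in> XQ" "flo q \<in> XQ" using True qD flo_XQ by blast+
    have fpq: "grid_le (flo p) (flo q)" using flo_mono True qD pq by blast
    have ip: "iota (flo p) \<in> XP" "iota (flo q) \<in> XP" using fp iota_XP by blast+
    have ipq: "grid_le (iota (flo p)) (iota (flo q))" using iota_mono fp fpq by blast
    have lp: "grid_le (iota (flo p)) p" "grid_le (iota (flo q)) q"
      using iota_flo_le True qD by blast+
    have c1: "f (flo p) \<in> carrier_mat (fst N (iota (flo p))) (fst M (flo p))"
      "f (flo q) \<in> carrier_mat (fst N (iota (flo q))) (fst M (flo q))"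
      using is_mor_carrier[OF f, of "flo p"] is_mor_carrier[OF f, of "flo q"] fp by (simp_all add: res_fst)
    have c2: "snd M (flo p) (flo q) \<in> carrier_mat (fst M (flo q)) (fst M (flo p))"
      using is_rep_carrier[OF M] .
    have c3: "snd N (iota (flo q)) q \<in> carrier_mat (fst N q) (fst N (iota (flo q)))"
      "snd N (iota (flo p)) (iota (flo q)) \<in> carrier_mat (fst N (iota (flo q))) (fst N (iota (flo p)))"
      "snd N (iota (flo p)) p \<in> carrier_mat (fst N p) (fst N (iota (flo p)))"
      "snd N p q \<in> carrier_mat (fst N q) (fst N p)"
      using is_rep_carrier[OF N] by blast+
    have nat: "f (flo q) * snd M (flo p) (flo q) = snd N (iota (flo p)) (iota (flo q)) * f (flo p)"
      using is_morD(5)[OF f fp fpq] fp fpq by (simp add: res_snd)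
    have "adjinv N f q * snd (Lo.R M) p q = snd N (iota (flo q)) q * f (flo q) * snd M (flo p) (flo q)"
      using True qD pq by (simp add: adjinv_def res_snd)
    also have "\<dots> = snd N (iota (flo q)) q * (f (flo q) * snd M (flo p) (flo q))"
      using c1 c2 c3 by (metis assoc_mult_mat)
    also have "\<dots> = snd N (iota (flo q)) q * (snd N (iota (flo p)) (iota (flo q)) * f (flo p))"
      using nat by simp
    also have "\<dots> = (snd N (iota (flo q)) q * snd N (iota (flo p)) (iota (flo q))) * f (flo p)"
      using c1 c2 c3 by (metis assoc_mult_mat)
    also have "snd N (iota (flo q)) q * snd N (iota (flo p)) (iota (flo q)) = snd N (iota (flo p)) q"
      using is_repD(5)[OF N ip(1) ip(2) pq(2) ipq lp(2)] by simp
    also have "snd N (iota (flo p)) q = snd N p q * snd N (iota (flo p)) p"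
      using is_repD(5)[OF N ip(1) pq(1) pq(2) lp(1) pq(3)] by simp
    also have "snd N p q * snd N (iota (flo p)) p * f (flo p) = snd N p q * (snd N (iota (flo p)) p * f (flo p))"
      using c1 c2 c3 by (metis assoc_mult_mat)
    also have "\<dots> = snd N p q * adjinv N f p" using True by (simp add: adjinv_def)
    finally show ?thesis .
  next
    case False
    have c1: "adjinv N f q \<in> carrier_mat (fst N q) (fst (Lo.R M) q)"
    proof (cases "q \<in> DD")
      case True
      have "f (flo q) \<in> carrier_mat (fst N (iota (flo q))) (fst M (flo q))"
        using is_mor_carrier[OF f, of "flo q"] flo_XQ[OF True] by (simp add: res_fst)
      then show ?thesis using True is_rep_carrier[OF N, of "iota (flo q)" q]
        by (simp add: adjinv_def res_fst mult_carrier_mat)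
    qed (simp add: adjinv_def res_fst)
    have c2: "snd (Lo.R M) p q \<in> carrier_mat (fst (Lo.R M) q) 0"
      using Lo.R_carrier[OF M, of p q] False by (simp add: res_fst)
    have 1: "adjinv N f q * snd (Lo.R M) p q = 0\<^sub>m (fst N q) 0"
      by (rule zero_cols, rule mult_carrier_mat[OF c1 c2])
    have 2: "snd N p q * adjinv N f p = 0\<^sub>m (fst N q) 0"
      using False is_rep_carrier[OF N, of p q] by (simp add: adjinv_def)
    show ?thesis using 1 2 by simp
  qed
qed

end

context gridinc begin

lemma Lo_snd_iflo:
  assumes M: "is_rep XQ grid_le M" and p: "p \<in> DD"
  shows "snd (Lo.R M) (iota (flo p)) p = 1\<^sub>m (fst M (flo p))"
proof -
  have fp: "flo p \<in> XQ" using flo_XQ[OF p] .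
  have "iota (flo p) \<in> DD" using iota_DD[OF fp] .
  then show ?thesis using p iota_flo_le[OF p] flo_iota[OF fp] is_repD(4)[OF M fp]
    by (simp add: res_snd)
qed

lemma adj_left:
  assumes M: "is_rep XQ grid_le M" and g: "is_mor XP grid_le (Lo.R M) N g"
  shows "adjinv N (Ri.Rm g) = g"
proof
  fix p
  show "adjinv N (Ri.Rm g) p = g p"
  proof (cases "p \<in> DD")
    case True
    have fp: "flo p \<in> XQ" using flo_XQ[OF True] .
    have ip: "iota (flo p) \<in> XP" using iota_XP[OF fp] .
    have pX: "p \<in> XP" using True DD_sub by blast
    have nat: "g p * snd (Lo.R M) (iota (flo p)) p = snd N (iota (flo p)) p * g (iota (flo p))"
      using is_morD(5)[OF g ip pX iota_flo_le[OF True]] .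
    have c: "g p \<in> carrier_mat (fst N p) (fst M (flo p))"
      using is_mor_carrier[OF g, of p] True by (simp add: res_fst)
    have "adjinv N (Ri.Rm g) p = snd N (iota (flo p)) p * g (iota (flo p))"
      using True fp by (simp add: adjinv_def res_mor_app)
    also have "\<dots> = g p" using nat Lo_snd_iflo[OF M True] c by simp
    finally show ?thesis .
  next
    case False
    have "g p \<in> carrier_mat (fst N p) 0" using is_mor_carrier[OF g, of p] False by (simp add: res_fst)
    then have "g p = 0\<^sub>m (fst N p) 0" by (rule zero_cols)
    then show ?thesis using False by (simp add: adjinv_def)
  qed
qed

lemma adj_right:
  assumes M: "is_rep XQ grid_le M" and N: "is_rep XP grid_le N"
    and f: "is_mor XQ grid_le M (Ri.R N) f"
  shows "Ri.Rm (adjinv N f) = f"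
proof
  fix q
  show "Ri.Rm (adjinv N f) q = f q"
  proof (cases "q \<in> XQ")
    case True
    have c: "f q \<in> carrier_mat (fst N (iota q)) (fst M q)"
      using is_mor_carrier[OF f, of q] True by (simp add: res_fst)
    show ?thesis using True iota_DD[OF True] flo_iota[OF True] is_repD(4)[OF N iota_XP[OF True]] c
      by (simp add: res_mor_app adjinv_def)
  next
    case False
    then show ?thesis using is_morD(3)[OF f False] is_repD(1)[OF M False]
      by (simp add: res_mor_app res_fst)
  qed
qed

lemma Lo_adj: "left_adjoint_to_res XQ grid_le XP grid_le iota Lo.R (\<lambda>M N f. Lo.Rm f)"
  unfolding left_adjoint_to_res_def
proof (intro conjI exI[of _ "\<lambda>M N g. Ri.Rm g"] allI impI)
  show "is_functor XQ grid_le XP grid_le Lo.R (\<lambda>M N f. Lo.Rm f)" by (rule Lo_functor)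
next
  fix M :: "('b list, 'k::field) prep" and N :: "('a list, 'k) prep"
  assume fp: "is_fp XQ grid_le M \<and> is_fp XP grid_le N"
  then have M: "is_rep XQ grid_le M" and N: "is_rep XP grid_le N" unfolding is_fp_def by auto
  show "bij_betw (Ri.Rm) {g. is_mor XP grid_le (Lo.R M) N g} {f. is_mor XQ grid_le M (Ri.R N) f}"
  proof (rule bij_betw_byWitness[where f'="adjinv N"])
    show "\<forall>a\<in>{g. is_mor XP grid_le (Lo.R M) N g}. adjinv N (Ri.Rm a) = a"
      using adj_left[OF M] by blast
    show "\<forall>a'\<in>{f. is_mor XQ grid_le M (Ri.R N) f}. Ri.Rm (adjinv N a') = a'"
      using adj_right[OF M N] by blast
    show "Ri.Rm ` {g. is_mor XP grid_le (Lo.R M) N g} \<subseteq> {f. is_mor XQ grid_le M (Ri.R N) f}"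
      using Ri.R_mor RiLo[OF M] by fastforce
    show "adjinv N ` {f. is_mor XQ grid_le M (Ri.R N) f} \<subseteq> {g. is_mor XP grid_le (Lo.R M) N g}"
      using adjinv_mor[OF M N] by blast
  qed
next
  fix M M' :: "('b list, 'k::field) prep" and N :: "('a list, 'k) prep" and a g
  assume as: "is_fp XQ grid_le M \<and> is_fp XQ grid_le M' \<and> is_fp XP grid_le N \<and>
       is_mor XQ grid_le M' M a \<and> is_mor XP grid_le (Lo.R M) N g"
  then have a: "is_mor XQ grid_le M' M a" by blast
  show "Ri.Rm (comp_mor g (Lo.Rm a)) = comp_mor (Ri.Rm g) a"
  proof
    fix q show "Ri.Rm (comp_mor g (Lo.Rm a)) q = comp_mor (Ri.Rm g) a q"
    proof (cases "q \<in> XQ")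
      case True then show ?thesis using iota_DD flo_iota by (simp add: res_mor_app comp_mor_def)
    next
      case False
      then show ?thesis using is_morD(3)[OF a False] is_repD(1)[OF is_morD(1)[OF a] False]
        is_repD(1)[OF is_morD(2)[OF a] False]
        by (simp add: res_mor_app comp_mor_def)
    qed
  qed
next
  fix M :: "('b list, 'k::field) prep" and N N' :: "('a list, 'k) prep" and b g
  show "Ri.Rm (comp_mor b g) = comp_mor (Ri.Rm b) (Ri.Rm g)" by (rule Ri.R_comp)
qed

lemma Lo_exact: "exact_functor XQ grid_le XP grid_le Lo.R (\<lambda>M N f. Lo.Rm f)"
  unfolding exact_functor_def using Lo.R_short_exact by blast

lemma ff_left:
  assumes f: "is_mor XQ grid_le M N f"
  shows "Ri.Rm (Lo.Rm f) = f"
proof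
  fix q show "Ri.Rm (Lo.Rm f) q = f q"
  proof (cases "q \<in> XQ")
    case True then show ?thesis using iota_DD flo_iota by (simp add: res_mor_app)
  next
    case False
    then show ?thesis using is_morD(3)[OF f False] is_repD(1)[OF is_morD(1)[OF f] False]
      is_repD(1)[OF is_morD(2)[OF f] False] by (simp add: res_mor_app)
  qed
qed

lemma ff_right:
  assumes M: "is_rep XQ grid_le M" and N: "is_rep XQ grid_le N"
    and g: "is_mor XP grid_le (Lo.R M) (Lo.R N) g"
  shows "Lo.Rm (Ri.Rm g) = g"
proof
  fix p show "Lo.Rm (Ri.Rm g) p = g p"
  proof (cases "p \<in> DD")
    case True
    have fp: "flo p \<in> XQ" using flo_XQ[OF True] .
    have ip: "iota (flo p) \<in> XP" using iota_XP[OF fp] .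
    have pX: "p \<in> XP" using True DD_sub by blast
    have nat: "g p * snd (Lo.R M) (iota (flo p)) p = snd (Lo.R N) (iota (flo p)) p * g (iota (flo p))"
      using is_morD(5)[OF g ip pX iota_flo_le[OF True]] .
    have c: "g p \<in> carrier_mat (fst N (flo p)) (fst M (flo p))"
      using is_mor_carrier[OF g, of p] True by (simp add: res_fst)
    have c2: "g (iota (flo p)) \<in> carrier_mat (fst N (flo p)) (fst M (flo p))"
      using is_mor_carrier[OF g, of "iota (flo p)"] iota_DD[OF fp] flo_iota[OF fp] by (simp add: res_fst)
    have "g p = g (iota (flo p))"
      using nat Lo_snd_iflo[OF M True] Lo_snd_iflo[OF N True] c c2 by simp
    then show ?thesis using True fp by (simp add: res_mor_app)
  next
    case False
    have "g p \<in> carrier_mat 0 0" using is_mor_carrier[OF g, of p] False by (simp add: res_fst)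
    then have "g p = 0\<^sub>m 0 0" by (rule zero_cols)
    then show ?thesis using False by (simp add: res_mor_app)
  qed
qed

lemma Lo_ff: "fully_faithful XQ grid_le XP grid_le Lo.R (\<lambda>M N f. Lo.Rm f)"
  unfolding fully_faithful_def
proof (intro allI impI)
  fix M N :: "('b list, 'k::field) prep"
  assume "is_fp XQ grid_le M \<and> is_fp XQ grid_le N"
  then have M: "is_rep XQ grid_le M" and N: "is_rep XQ grid_le N" unfolding is_fp_def by auto
  show "bij_betw (Lo.Rm) {f. is_mor XQ grid_le M N f} {g. is_mor XP grid_le (Lo.R M) (Lo.R N) g}"
  proof (rule bij_betw_byWitness[where f'="Ri.Rm"])
    show "\<forall>a\<in>{f. is_mor XQ grid_le M N f}. Ri.Rm (Lo.Rm a) = a" using ff_left by blast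
    show "\<forall>a'\<in>{g. is_mor XP grid_le (Lo.R M) (Lo.R N) g}. Lo.Rm (Ri.Rm a') = a'"
      using ff_right[OF M N] by blast
    show "Lo.Rm ` {f. is_mor XQ grid_le M N f} \<subseteq> {g. is_mor XP grid_le (Lo.R M) (Lo.R N) g}"
      using Lo.R_mor by blast
    show "Ri.Rm ` {g. is_mor XP grid_le (Lo.R M) (Lo.R N) g} \<subseteq> {f. is_mor XQ grid_le M N f}"
      using Ri.R_mor RiLo[OF M] RiLo[OF N] by fastforce
  qed
qed

end

inductive_set lspan :: "nat \<Rightarrow> 'k::field vec list \<Rightarrow> 'k vec set" for n ws where
  lspan_zero: "0\<^sub>v n \<in> lspan n ws"
| lspan_gen: "w \<in> set ws \<Longrightarrow> w \<in> lspan n ws"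
| lspan_add: "u \<in> lspan n ws \<Longrightarrow> v \<in> lspan n ws \<Longrightarrow> u + v \<in> lspan n ws"
| lspan_smult: "u \<in> lspan n ws \<Longrightarrow> c \<cdot>\<^sub>v u \<in> lspan n ws"

definition subsp :: "nat \<Rightarrow> 'k::field vec set \<Rightarrow> bool" where
  "subsp n U \<longleftrightarrow> U \<subseteq> carrier_vec n \<and> 0\<^sub>v n \<in> U \<and> (\<forall>u\<in>U. \<forall>v\<in>U. u + v \<in> U) \<and> (\<forall>c. \<forall>u\<in>U. c \<cdot>\<^sub>v u \<in> U)"

lemma lspan_carrier: "set ws \<subseteq> carrier_vec n \<Longrightarrow> lspan n ws \<subseteq> carrier_vec n"
proof
  fix v assume ws: "set ws \<subseteq> carrier_vec n" and v: "v \<in> lspan n ws"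
  from v show "v \<in> carrier_vec n" by (induct rule: lspan.induct) (use ws in auto)
qed

lemma lspan_sub:
  assumes U: "subsp n U" and ws: "set ws \<subseteq> U"
  shows "lspan n ws \<subseteq> U"
proof
  fix v assume "v \<in> lspan n ws"
  then show "v \<in> U" using U ws unfolding subsp_def by (induct rule: lspan.induct) auto
qed

lemma lspan_subsp: "set ws \<subseteq> carrier_vec n \<Longrightarrow> subsp n (lspan n ws)"
  unfolding subsp_def using lspan_carrier by (blast intro: lspan.intros)

lemma lspan_mono: "set ws \<subseteq> set ws' \<Longrightarrow> set ws' \<subseteq> carrier_vec n \<Longrightarrow> lspan n ws \<subseteq> lspan n ws'"
  by (rule lspan_sub[OF lspan_subsp]) (auto intro: lspan_gen)

lemma lspan_Cons:
  assumes ws: "set ws \<subseteq> carrier_vec n" and w: "w \<in> carrier_vec n"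
  shows "lspan n (w # ws) = {c \<cdot>\<^sub>v w + u | c u. u \<in> lspan n ws}"
proof
  have ws': "set (w # ws) \<subseteq> carrier_vec n" using ws w by auto
  show "{c \<cdot>\<^sub>v w + u | c u. u \<in> lspan n ws} \<subseteq> lspan n (w # ws)"
  proof
    fix x assume "x \<in> {c \<cdot>\<^sub>v w + u | c u. u \<in> lspan n ws}"
    then obtain c u where x: "x = c \<cdot>\<^sub>v w + u" and u: "u \<in> lspan n ws" by auto
    have "u \<in> lspan n (w # ws)" using lspan_mono[OF _ ws'] u by auto
    then show "x \<in> lspan n (w # ws)" unfolding x by (meson lspan.intros list.set_intros(1))
  qed
  show "lspan n (w # ws) \<subseteq> {c \<cdot>\<^sub>v w + u | c u. u \<in> lspan n ws}"
  proof
    fix x assume "x \<in> lspan n (w # ws)"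
    then show "x \<in> {c \<cdot>\<^sub>v w + u | c u. u \<in> lspan n ws}"
    proof (induct rule: lspan.induct)
      case lspan_zero
      have "0\<^sub>v n = 0 \<cdot>\<^sub>v w + 0\<^sub>v n" using w by (auto intro!: eq_vecI)
      then show ?case by (blast intro: lspan.intros)
    next
      case (lspan_gen v)
      show ?case
      proof (cases "v = w")
        case True
        have "v = 1 \<cdot>\<^sub>v w + 0\<^sub>v n" using w True by (auto intro!: eq_vecI)
        then show ?thesis by (blast intro: lspan.intros)
      next
        case False
        then have v: "v \<in> set ws" using lspan_gen by auto
        then have "v = 0 \<cdot>\<^sub>v w + v" using w ws by (auto intro!: eq_vecI)
        then show ?thesis using v by (blast intro: lspan.intros)
      qed
    next
      case (lspan_add u v)
      then obtain c1 u1 c2 u2 where u: "u = c1 \<cdot>\<^sub>v w + u1" "u1 \<in> lspan n ws"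
        and v: "v = c2 \<cdot>\<^sub>v w + u2" "u2 \<in> lspan n ws" by auto
      have c: "u1 \<in> carrier_vec n" "u2 \<in> carrier_vec n" using u v lspan_carrier[OF ws] by auto
      have "u + v = (c1 + c2) \<cdot>\<^sub>v w + (u1 + u2)" unfolding u v using c w
        by (auto intro!: eq_vecI simp: algebra_simps)
      then show ?case using u v by (blast intro: lspan.intros)
    next
      case (lspan_smult u d)
      then obtain c1 u1 where u: "u = c1 \<cdot>\<^sub>v w + u1" "u1 \<in> lspan n ws" by auto
      have c: "u1 \<in> carrier_vec n" using u lspan_carrier[OF ws] by auto
      have "d \<cdot>\<^sub>v u = (d * c1) \<cdot>\<^sub>v w + d \<cdot>\<^sub>v u1" unfolding u using c w
        by (auto intro!: eq_vecI simp: algebra_simps)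
      then show ?case using u by (blast intro: lspan.intros)
    qed
  qed
qed

lemma mat_of_cols_mult_lspan:
  assumes ws: "set ws \<subseteq> carrier_vec n" and v: "v \<in> carrier_vec (length ws)"
  shows "mat_of_cols n ws *\<^sub>v v \<in> lspan n ws"
  using ws v
proof (induct ws arbitrary: v)
  case Nil
  have "mat_of_cols n [] *\<^sub>v v = 0\<^sub>v n" using Nil by (auto intro!: eq_vecI simp: scalar_prod_def)
  then show ?case by (simp add: lspan_zero)
next
  case (Cons w ws)
  let ?v' = "vec (length ws) (\<lambda>i. v $ Suc i)"
  have w: "w \<in> carrier_vec n" and ws: "set ws \<subseteq> carrier_vec n" using Cons by auto
  have "mat_of_cols n (w # ws) *\<^sub>v v = v $ 0 \<cdot>\<^sub>v w + mat_of_cols n ws *\<^sub>v ?v'"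
  proof (rule eq_vecI)
    fix i assume "i < dim_vec (v $ 0 \<cdot>\<^sub>v w + mat_of_cols n ws *\<^sub>v ?v')"
    then have i: "i < n" by simp
    have "(mat_of_cols n (w # ws) *\<^sub>v v) $ i = (\<Sum>j<Suc (length ws). mat_of_cols n (w # ws) $$ (i, j) * v $ j)"
      using i Cons.prems(2) by (simp add: scalar_prod_def lessThan_atLeast0)
    also have "\<dots> = mat_of_cols n (w # ws) $$ (i, 0) * v $ 0 + (\<Sum>j<length ws. mat_of_cols n (w # ws) $$ (i, Suc j) * v $ Suc j)"
      by (rule sum.lessThan_Suc_shift)
    also have "\<dots> = w $ i * v $ 0 + (\<Sum>j<length ws. mat_of_cols n ws $$ (i, j) * v $ Suc j)"
      using i by (simp add: mat_of_cols_Cons_index_0 mat_of_cols_Cons_index_Suc)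
    also have "\<dots> = (v $ 0 \<cdot>\<^sub>v w + mat_of_cols n ws *\<^sub>v ?v') $ i"
      using i w by (simp add: scalar_prod_def lessThan_atLeast0 mult.commute)
    finally show "(mat_of_cols n (w # ws) *\<^sub>v v) $ i = (v $ 0 \<cdot>\<^sub>v w + mat_of_cols n ws *\<^sub>v ?v') $ i" .
  qed simp
  moreover have "mat_of_cols n ws *\<^sub>v ?v' \<in> lspan n ws" using Cons.hyps[OF ws] by simp
  ultimately show ?case using lspan_Cons[OF ws w] by auto
qed

lemma kernel_span:
  assumes A: "A \<in> carrier_mat r c"
  shows "\<exists>L. set L \<subseteq> mat_ker A \<and> mat_ker A \<subseteq> lspan c L"
proof -
  obtain B where fB: "finite B" and bas: "kernel.basis c A B"
    using kernel_basis_exists[OF A] by blast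
  interpret K: kernel r c A by (unfold_locales) (rule A)
  have BK: "B \<subseteq> mat_kernel A" and sp: "K.Ker.span B = mat_kernel A"
    using bas unfolding K.Ker.basis_def by auto
  obtain L where L: "set L = B" using finite_list[OF fB] by blast
  have Lc: "set L \<subseteq> carrier_vec c" using BK L A mat_kernel_def by auto
  have ker: "mat_ker A = mat_kernel A" unfolding mat_ker_def mat_kernel_def by simp
  have "mat_kernel A = K.NC.span (set L)" using sp K.span_same[OF BK] L by simp
  also have "\<dots> = K.NC.span_list L" using K.NC.span_list_as_span[OF Lc] by simp
  also have "\<dots> \<subseteq> lspan c L"
  proof
    fix v assume "v \<in> K.NC.span_list L"
    then obtain cf where v: "v = K.NC.lincomb_list cf L" unfolding K.NC.span_list_def by auto
    have "v = mat_of_cols c L *\<^sub>v vec (length L) cf"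
      unfolding v by (rule K.NC.lincomb_list_as_mat_mult) (use Lc in auto)
    then show "v \<in> lspan c L" using mat_of_cols_mult_lspan[OF Lc] by simp
  qed
  finally show ?thesis using ker BK L by auto
qed


lemma lspan_Nil: "lspan n [] = {0\<^sub>v n}"
proof
  show "lspan n [] \<subseteq> {0\<^sub>v n}"
  proof
    fix v assume "v \<in> lspan n []"
    then show "v \<in> {0\<^sub>v n}" by (induct rule: lspan.induct) auto
  qed
qed (auto intro: lspan_zero)

lemma dsum_mult:
  assumes "A1 \<in> carrier_mat a2 a1" "B1 \<in> carrier_mat b2 b1" "A2 \<in> carrier_mat a3 a2" "B2 \<in> carrier_mat b3 b2"
  shows "four_block_mat A2 (0\<^sub>m a3 b2) (0\<^sub>m b3 a2) B2 * four_block_mat A1 (0\<^sub>m a2 b1) (0\<^sub>m b2 a1) B1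
     = four_block_mat (A2 * A1) (0\<^sub>m a3 b1) (0\<^sub>m b3 a1) (B2 * B1)"
  using assms by (subst mult_four_block_mat[of _ a3 a2 _ b2 _ b3], auto)

lemma H1:
  assumes T: "T \<in> carrier_mat r' r" and A: "A \<in> carrier_mat r c1" and B: "B \<in> carrier_mat r c2"
  shows "T * four_block_mat A B (0\<^sub>m 0 c1) (0\<^sub>m 0 c2) = four_block_mat (T * A) (T * B) (0\<^sub>m 0 c1) (0\<^sub>m 0 c2)"
proof -
  have "T = four_block_mat T (0\<^sub>m r' 0) (0\<^sub>m 0 r) (0\<^sub>m 0 0)"
    using T by (auto intro!: eq_matI)
  then have "T * four_block_mat A B (0\<^sub>m 0 c1) (0\<^sub>m 0 c2) =
     four_block_mat T (0\<^sub>m r' 0) (0\<^sub>m 0 r) (0\<^sub>m 0 0) * four_block_mat A B (0\<^sub>m 0 c1) (0\<^sub>m 0 c2)" by simp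
  also have "\<dots> = four_block_mat (T * A) (T * B) (0\<^sub>m 0 c1) (0\<^sub>m 0 c2)"
    using T A B by (subst mult_four_block_mat[of _ r' r _ 0 _ 0], auto)
  finally show ?thesis .
qed

lemma H2:
  assumes A': "A' \<in> carrier_mat r c1'" and B': "B' \<in> carrier_mat r c2'"
    and I: "I \<in> carrier_mat c1' c1" and F: "F \<in> carrier_mat c2' c2"
  shows "four_block_mat A' B' (0\<^sub>m 0 c1') (0\<^sub>m 0 c2') * four_block_mat I (0\<^sub>m c1' c2) (0\<^sub>m c2' c1) F
     = four_block_mat (A' * I) (B' * F) (0\<^sub>m 0 c1) (0\<^sub>m 0 c2)"
  using assms by (subst mult_four_block_mat[of _ r c1' _ c2' _ 0], auto)

lemma append_vec_0: "dim_vec w = 0 \<Longrightarrow> x @\<^sub>v w = x"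
  by (auto intro!: eq_vecI)

lemma H3:
  assumes A: "A \<in> carrier_mat r c1" and B: "B \<in> carrier_mat r c2"
  shows "mat_img (four_block_mat A B (0\<^sub>m 0 c1) (0\<^sub>m 0 c2)) = {a + b | a b. a \<in> mat_img A \<and> b \<in> mat_img B}"
proof
  show "mat_img (four_block_mat A B (0\<^sub>m 0 c1) (0\<^sub>m 0 c2)) \<subseteq> {a + b | a b. a \<in> mat_img A \<and> b \<in> mat_img B}"
  proof
    fix x assume "x \<in> mat_img (four_block_mat A B (0\<^sub>m 0 c1) (0\<^sub>m 0 c2))"
    then obtain v where x: "x = four_block_mat A B (0\<^sub>m 0 c1) (0\<^sub>m 0 c2) *\<^sub>v v" and v: "v \<in> carrier_vec (c1 + c2)"
      unfolding mat_img_def using A B by auto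
    have vv: "v = vec_first v c1 @\<^sub>v vec_last v c2" using v by simp
    have "x = (A *\<^sub>v vec_first v c1 + B *\<^sub>v vec_last v c2) @\<^sub>v (0\<^sub>m 0 c1 *\<^sub>v vec_first v c1 + 0\<^sub>m 0 c2 *\<^sub>v vec_last v c2)"
      unfolding x by (subst vv, rule four_block_mat_mult_vec[OF A B]) auto
    also have "\<dots> = A *\<^sub>v vec_first v c1 + B *\<^sub>v vec_last v c2" by (rule append_vec_0) simp
    finally have x': "x = A *\<^sub>v vec_first v c1 + B *\<^sub>v vec_last v c2" .
    have "A *\<^sub>v vec_first v c1 \<in> mat_img A" unfolding mat_img_def using A by auto
    moreover have "B *\<^sub>v vec_last v c2 \<in> mat_img B" unfolding mat_img_def using B by auto
    ultimately show "x \<in> {a + b | a b. a \<in> mat_img A \<and> b \<in> mat_img B}" using x' by blast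
  qed
  show "{a + b | a b. a \<in> mat_img A \<and> b \<in> mat_img B} \<subseteq> mat_img (four_block_mat A B (0\<^sub>m 0 c1) (0\<^sub>m 0 c2))"
  proof
    fix x assume "x \<in> {a + b | a b. a \<in> mat_img A \<and> b \<in> mat_img B}"
    then obtain a b where ab: "x = a + b" "a \<in> mat_img A" "b \<in> mat_img B" by blast
    from ab(2) obtain u where u: "u \<in> carrier_vec c1" and a: "a = A *\<^sub>v u"
      unfolding mat_img_def using A by auto
    from ab(3) obtain w where w: "w \<in> carrier_vec c2" and b: "b = B *\<^sub>v w"
      unfolding mat_img_def using B by auto
    have x: "x = A *\<^sub>v u + B *\<^sub>v w" using ab a b by simp
    have "four_block_mat A B (0\<^sub>m 0 c1) (0\<^sub>m 0 c2) *\<^sub>v (u @\<^sub>v w) =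
       (A *\<^sub>v u + B *\<^sub>v w) @\<^sub>v (0\<^sub>m 0 c1 *\<^sub>v u + 0\<^sub>m 0 c2 *\<^sub>v w)"
      by (rule four_block_mat_mult_vec[OF A B _ _ u w]) auto
    also have "\<dots> = x" unfolding x by (rule append_vec_0) simp
    finally have "x = four_block_mat A B (0\<^sub>m 0 c1) (0\<^sub>m 0 c2) *\<^sub>v (u @\<^sub>v w)" by simp
    moreover have "u @\<^sub>v w \<in> carrier_vec (dim_col (four_block_mat A B (0\<^sub>m 0 c1) (0\<^sub>m 0 c2)))"
      using A B u w by simp
    ultimately show "x \<in> mat_img (four_block_mat A B (0\<^sub>m 0 c1) (0\<^sub>m 0 c2))"
      unfolding mat_img_def by blast
  qed
qed

lemma H4:
  assumes S: "S \<in> carrier_mat r m" and v: "v \<in> carrier_vec m"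
  shows "mat_img (S * mat_of_cols m [v]) = {c \<cdot>\<^sub>v (S *\<^sub>v v) | c. True}"
proof -
  have V: "mat_of_cols m [v] \<in> carrier_mat m 1" using mat_of_cols_carrier[of m "[v]"] by simp
  have key: "mat_of_cols m [v] *\<^sub>v u = u $ 0 \<cdot>\<^sub>v v" if u: "u \<in> carrier_vec 1" for u
  proof (rule eq_vecI)
    fix i assume "i < dim_vec (u $ 0 \<cdot>\<^sub>v v)"
    then have i: "i < m" using v by simp
    have "(mat_of_cols m [v] *\<^sub>v u) $ i = row (mat_of_cols m [v]) i \<bullet> u" using i by simp
    also have "\<dots> = (\<Sum>k\<in>{0..<1}. row (mat_of_cols m [v]) i $ k * u $ k)"
      using u by (simp add: scalar_prod_def)
    also have "\<dots> = v $ i * u $ 0" using i by (simp add: mat_of_cols_index)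
    finally show "(mat_of_cols m [v] *\<^sub>v u) $ i = (u $ 0 \<cdot>\<^sub>v v) $ i" using i v by (simp add: mult.commute)
  qed (use v in simp)
  have eq: "(S * mat_of_cols m [v]) *\<^sub>v u = u $ 0 \<cdot>\<^sub>v (S *\<^sub>v v)" if u: "u \<in> carrier_vec 1" for u
    using assoc_mult_mat_vec[OF S V u] key[OF u] mult_mat_vec[OF S v] by simp
  have dc: "dim_col (S * mat_of_cols m [v]) = 1" by simp
  show ?thesis
  proof (rule equalityI; rule subsetI)
    fix x assume "x \<in> mat_img (S * mat_of_cols m [v])"
    then obtain u where u: "u \<in> carrier_vec 1" and x: "x = (S * mat_of_cols m [v]) *\<^sub>v u"
      unfolding mat_img_def dc by blast
    show "x \<in> {c \<cdot>\<^sub>v (S *\<^sub>v v) | c. True}" using eq[OF u] x by blast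
  next
    fix x assume "x \<in> {c \<cdot>\<^sub>v (S *\<^sub>v v) | c. True}"
    then obtain c where x: "x = c \<cdot>\<^sub>v (S *\<^sub>v v)" by blast
    have u: "vec 1 (\<lambda>_. c) \<in> carrier_vec 1" by simp
    have "x = (S * mat_of_cols m [v]) *\<^sub>v vec 1 (\<lambda>_. c)" using eq[OF u] x by simp
    then show "x \<in> mat_img (S * mat_of_cols m [v])" unfolding mat_img_def dc using u by blast
  qed
qed

lemma H5: "mat_img (0\<^sub>m r 0 :: 'k::field mat) = {0\<^sub>v r}"
proof -
  have "0\<^sub>m r 0 *\<^sub>v v = 0\<^sub>v r" if "v \<in> carrier_vec 0" for v :: "'k vec"
    by (rule eq_vecI) (use that in \<open>simp_all add: scalar_prod_def\<close>)
  then show ?thesis unfolding mat_img_def by (auto intro!: exI[of _ "0\<^sub>v 0"])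
qed

lemma ind_fst: "fst (indicator_rep lr S) p = (if p \<in> S then 1 else 0)"
  by (simp add: indicator_rep_def)
lemma ind_snd: "snd (indicator_rep lr S) p q = (if p \<in> S \<and> q \<in> S \<and> lr p q then 1\<^sub>m 1
   else 0\<^sub>m (if q \<in> S then 1 else 0) (if p \<in> S then 1 else 0))"
  by (simp add: indicator_rep_def)
lemma ind_carrier: "snd (indicator_rep lr S) p q \<in> carrier_mat (fst (indicator_rep lr S) q) (fst (indicator_rep lr S) p)"
  by (simp add: indicator_rep_def)

lemma dsum_fst: "fst (dsum M N) p = fst M p + fst N p" by (simp add: dsum_def)
lemma dsum_snd: "snd (dsum M N) p q = four_block_mat (snd M p q) (0\<^sub>m (fst M q) (fst N p))
                        (0\<^sub>m (fst N q) (fst M p)) (snd N p q)" by (simp add: dsum_def)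

lemma free_Cons: "free_rep X lr (a # as) = dsum (indicator_rep lr (upset X lr {a})) (free_rep X lr as)"
  by (simp add: free_rep_def dsum_list_def)
lemma free_Nil: "free_rep X lr [] = zero_rep"
  by (simp add: free_rep_def dsum_list_def)

locale preo =
  fixes X :: "'p set" and lr :: "'p \<Rightarrow> 'p \<Rightarrow> bool"
  assumes rf: "\<And>x. x \<in> X \<Longrightarrow> lr x x"
    and tr: "\<And>x y z. x \<in> X \<Longrightarrow> y \<in> X \<Longrightarrow> z \<in> X \<Longrightarrow> lr x y \<Longrightarrow> lr y z \<Longrightarrow> lr x z"
begin

lemma ind_rep:
  assumes SX: "S \<subseteq> X" and cv: "convex_in X lr S"
  shows "is_rep X lr (indicator_rep lr S :: ('p, 'k::field) prep)"
  unfolding is_rep_def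
proof (intro conjI allI impI ballI)
  fix p assume "p \<notin> X" then show "fst (indicator_rep lr S :: ('p, 'k) prep) p = 0"
    using SX by (auto simp: ind_fst)
next
  fix p q assume "\<not> (p \<in> X \<and> q \<in> X \<and> lr p q)"
  then show "snd (indicator_rep lr S :: ('p, 'k) prep) p q =
    0\<^sub>m (fst (indicator_rep lr S :: ('p, 'k) prep) q) (fst (indicator_rep lr S :: ('p, 'k) prep) p)"
    using SX by (auto simp: ind_fst ind_snd)
next
  fix p q show "snd (indicator_rep lr S :: ('p, 'k) prep) p q \<in>
    carrier_mat (fst (indicator_rep lr S :: ('p, 'k) prep) q) (fst (indicator_rep lr S :: ('p, 'k) prep) p)"
    by (rule ind_carrier)
next
  fix p assume "p \<in> X" then show "snd (indicator_rep lr S :: ('p, 'k) prep) p p =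
    1\<^sub>m (fst (indicator_rep lr S :: ('p, 'k) prep) p)"
    using rf by (simp add: ind_fst ind_snd)
next
  fix p q s assume pqs: "p \<in> X" "q \<in> X" "s \<in> X" "lr p q \<and> lr q s"
  let ?I = "indicator_rep lr S :: ('p, 'k) prep"
  show "snd ?I p s = snd ?I q s * snd ?I p q"
  proof (cases "p \<in> S \<and> s \<in> S")
    case True
    then have "q \<in> S" using cv pqs unfolding convex_in_def by blast
    then show ?thesis using True pqs tr[of p q s] by (simp add: ind_snd)
  next
    case False
    have c: "snd ?I q s * snd ?I p q \<in> carrier_mat (fst ?I s) (fst ?I p)"
      using ind_carrier by (metis mult_carrier_mat)
    show ?thesis
    proof (cases "p \<in> S")
      case True
      then have s: "s \<notin> S" using False by blast
      have "snd ?I q s * snd ?I p q = 0\<^sub>m 0 (fst ?I p)" using c s by (simp add: ind_fst zero_rows)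
      then show ?thesis using s by (simp add: ind_snd ind_fst)
    next
      case False
      have "snd ?I q s * snd ?I p q = 0\<^sub>m (fst ?I s) 0" using c False by (simp add: ind_fst zero_cols)
      then show ?thesis using False by (simp add: ind_snd ind_fst)
    qed
  qed
qed

lemma zero_rep_rep: "is_rep X lr (zero_rep :: ('p, 'k::field) prep)"
  unfolding is_rep_def zero_rep_def by auto

lemma dsum_rep:
  assumes M: "is_rep X lr M" and N: "is_rep X lr N"
  shows "is_rep X lr (dsum M N)"
  unfolding is_rep_def
proof (intro conjI allI impI ballI)
  fix p assume "p \<notin> X" then show "fst (dsum M N) p = 0" using is_repD(1)[OF M] is_repD(1)[OF N]
    by (simp add: dsum_fst)
next
  fix p q assume a: "\<not> (p \<in> X \<and> q \<in> X \<and> lr p q)"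
  show "snd (dsum M N) p q = 0\<^sub>m (fst (dsum M N) q) (fst (dsum M N) p)"
    using is_repD(2)[OF M a] is_repD(2)[OF N a] by (simp add: dsum_snd dsum_fst four_block_zero_mat)
next
  fix p q show "snd (dsum M N) p q \<in> carrier_mat (fst (dsum M N) q) (fst (dsum M N) p)"
    using is_rep_carrier[OF M, of p q] is_rep_carrier[OF N, of p q]
    by (simp add: dsum_snd dsum_fst four_block_carrier_mat)
next
  fix p assume p: "p \<in> X" then show "snd (dsum M N) p p = 1\<^sub>m (fst (dsum M N) p)"
    using is_repD(4)[OF M p] is_repD(4)[OF N p] by (simp add: dsum_snd dsum_fst)
next
  fix p q s assume pqs: "p \<in> X" "q \<in> X" "s \<in> X" "lr p q \<and> lr q s"
  show "snd (dsum M N) p s = snd (dsum M N) q s * snd (dsum M N) p q"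
    unfolding dsum_snd
    by (subst dsum_mult[OF is_rep_carrier[OF M] is_rep_carrier[OF N] is_rep_carrier[OF M] is_rep_carrier[OF N]])
       (use is_repD(5)[OF M pqs(1-3)] is_repD(5)[OF N pqs(1-3)] pqs(4) in simp)
qed

lemma upset_sub: "upset X lr {a} \<subseteq> X" by (auto simp: upset_def)

lemma upset_convex: "a \<in> X \<Longrightarrow> convex_in X lr (upset X lr {a})"
  unfolding convex_in_def upset_def using tr by blast

lemma free_rep_rep: "set as \<subseteq> X \<Longrightarrow> is_rep X lr (free_rep X lr as :: ('p, 'k::field) prep)"
proof (induct as)
  case Nil then show ?case using zero_rep_rep by (simp add: free_Nil)
next
  case (Cons a as)
  then have a: "a \<in> X" and IH: "is_rep X lr (free_rep X lr as :: ('p, 'k) prep)" by auto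
  have i: "is_rep X lr (indicator_rep lr (upset X lr {a}) :: ('p, 'k) prep)"
    by (rule ind_rep[OF upset_sub upset_convex[OF a]])
  show ?case unfolding free_Cons by (rule dsum_rep[OF i IH])
qed

end

definition nfree :: "'p set \<Rightarrow> ('p \<Rightarrow> 'p \<Rightarrow> bool) \<Rightarrow> 'p list \<Rightarrow> 'p \<Rightarrow> nat" where
  "nfree X lr as z = length (filter (\<lambda>a. z \<in> upset X lr {a}) as)"

lemma nfree_out: "p \<notin> X \<Longrightarrow> nfree X lr as p = 0"
  by (simp add: nfree_def upset_def)

lemma free_fst: "fst (free_rep X lr as :: ('p,'k::field) prep) z = nfree X lr as z"
  by (induct as) (auto simp: free_Nil free_Cons dsum_fst ind_fst nfree_def zero_rep_def)

definition colblk :: "'p set \<Rightarrow> ('p \<Rightarrow> 'p \<Rightarrow> bool) \<Rightarrow> ('p,'k::field) prep \<Rightarrow> ('p \<times> 'k vec) \<Rightarrow> 'p \<Rightarrow> 'k mat" where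
  "colblk X lr N g z = (if z \<in> upset X lr {fst g} then snd N (fst g) z * mat_of_cols (fst N (fst g)) [snd g]
     else 0\<^sub>m (fst N z) 0)"

fun fm :: "'p set \<Rightarrow> ('p \<Rightarrow> 'p \<Rightarrow> bool) \<Rightarrow> ('p,'k::field) prep \<Rightarrow> ('p \<times> 'k vec) list \<Rightarrow> 'p \<Rightarrow> 'k mat" where
  "fm X lr N [] z = 0\<^sub>m (fst N z) 0"
| "fm X lr N (g # gs) z = four_block_mat (colblk X lr N g z) (fm X lr N gs z)
     (0\<^sub>m 0 (if z \<in> upset X lr {fst g} then 1 else 0))
     (0\<^sub>m 0 (nfree X lr (map fst gs) z))"

definition gat :: "'p set \<Rightarrow> ('p \<Rightarrow> 'p \<Rightarrow> bool) \<Rightarrow> ('p,'k::field) prep \<Rightarrow> ('p \<times> 'k vec) list \<Rightarrow> 'p \<Rightarrow> 'k vec list" where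
  "gat X lr N gs z = map (\<lambda>g. snd N (fst g) z *\<^sub>v snd g) (filter (\<lambda>g. z \<in> upset X lr {fst g}) gs)"

lemma colblk_carrier:
  assumes N: "is_rep X lr N"
  shows "colblk X lr N g z \<in> carrier_mat (fst N z) (fst (indicator_rep lr (upset X lr {fst g}) :: ('p,'k::field) prep) z)"
proof (cases "z \<in> upset X lr {fst g}")
  case True
  have V: "mat_of_cols (fst N (fst g)) [snd g] \<in> carrier_mat (fst N (fst g)) 1"
    using mat_of_cols_carrier[of "fst N (fst g)" "[snd g]"] by simp
  have "snd N (fst g) z * mat_of_cols (fst N (fst g)) [snd g] \<in> carrier_mat (fst N z) 1"
    by (rule mult_carrier_mat[OF is_rep_carrier[OF N] V])
  then show ?thesis using True by (simp add: colblk_def ind_fst)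
qed (simp add: colblk_def ind_fst)

lemma fm_carrier:
  assumes N: "is_rep X lr N"
  shows "fm X lr N gs z \<in> carrier_mat (fst N z) (fst (free_rep X lr (map fst gs) :: ('p,'k::field) prep) z)"
proof (induct gs)
  case Nil then show ?case by (simp add: free_Nil zero_rep_def)
next
  case (Cons g gs)
  have "fm X lr N (g # gs) z \<in> carrier_mat (fst N z + 0)
    (fst (indicator_rep lr (upset X lr {fst g}) :: ('p,'k) prep) z + fst (free_rep X lr (map fst gs) :: ('p,'k) prep) z)"
    unfolding fm.simps
    using four_block_carrier_mat[OF colblk_carrier[OF N, of g z] zero_carrier_mat[of 0 "nfree X lr (map fst gs) z"],
      of "fm X lr N gs z" "0\<^sub>m 0 (if z \<in> upset X lr {fst g} then 1 else 0)"]
    by (simp add: ind_fst free_fst)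
  then show ?case by (simp add: free_Cons dsum_fst)
qed

lemma fm_img:
  assumes N: "is_rep X lr N" and gs: "\<forall>g\<in>set gs. snd g \<in> carrier_vec (fst N (fst g))"
  shows "mat_img (fm X lr N gs z) = lspan (fst N z) (gat X lr N gs z)"
  using gs
proof (induct gs)
  case Nil then show ?case by (simp add: H5 lspan_Nil gat_def)
next
  case (Cons g gs)
  have IH: "mat_img (fm X lr N gs z) = lspan (fst N z) (gat X lr N gs z)" using Cons by auto
  have gc: "set (gat X lr N gs z) \<subseteq> carrier_vec (fst N z)"
    using Cons.prems is_rep_carrier[OF N] by (auto simp: gat_def intro!: mult_mat_vec_carrier)
  have c1: "colblk X lr N g z \<in> carrier_mat (fst N z) (if z \<in> upset X lr {fst g} then 1 else 0)"
    using colblk_carrier[OF N, of g z] by (simp add: ind_fst)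
  have c2: "fm X lr N gs z \<in> carrier_mat (fst N z) (nfree X lr (map fst gs) z)"
    using fm_carrier[OF N, of gs z] by (simp add: free_fst)
  have "mat_img (fm X lr N (g # gs) z) = {a + b | a b. a \<in> mat_img (colblk X lr N g z) \<and> b \<in> mat_img (fm X lr N gs z)}"
    unfolding fm.simps by (rule H3[OF c1 c2])
  also have "\<dots> = lspan (fst N z) (gat X lr N (g # gs) z)"
  proof (cases "z \<in> upset X lr {fst g}")
    case True
    have v: "snd g \<in> carrier_vec (fst N (fst g))" using Cons.prems by auto
    have w: "snd N (fst g) z *\<^sub>v snd g \<in> carrier_vec (fst N z)" by (rule mult_mat_vec_carrier[OF is_rep_carrier[OF N] v])
    have cb: "mat_img (colblk X lr N g z) = {c \<cdot>\<^sub>v (snd N (fst g) z *\<^sub>v snd g) | c. True}"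
      using True H4[OF is_rep_carrier[OF N] v] by (simp add: colblk_def)
    have "{a + b | a b. a \<in> mat_img (colblk X lr N g z) \<and> b \<in> mat_img (fm X lr N gs z)}
      = {c \<cdot>\<^sub>v (snd N (fst g) z *\<^sub>v snd g) + u | c u. u \<in> lspan (fst N z) (gat X lr N gs z)}"
      unfolding IH cb by auto
    also have "\<dots> = lspan (fst N z) ((snd N (fst g) z *\<^sub>v snd g) # gat X lr N gs z)"
      by (rule lspan_Cons[OF gc w, symmetric])
    finally show ?thesis using True by (simp add: gat_def)
  next
    case False
    have "mat_img (colblk X lr N g z) = {0\<^sub>v (fst N z)}" using False by (simp add: colblk_def H5)
    moreover have "b \<in> lspan (fst N z) (gat X lr N gs z) \<Longrightarrow> 0\<^sub>v (fst N z) + b = b" for b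
      using lspan_carrier[OF gc] by auto
    ultimately have "{a + b | a b. a \<in> mat_img (colblk X lr N g z) \<and> b \<in> mat_img (fm X lr N gs z)}
      = lspan (fst N z) (gat X lr N gs z)" unfolding IH by force
    then show ?thesis using False by (simp add: gat_def)
  qed
  finally show ?case .
qed

context preo begin

lemma colblk_nat:
  assumes N: "is_rep X lr N" and x: "fst g \<in> X" and zz: "z \<in> X" "z' \<in> X" "lr z z'"
  shows "colblk X lr N g z' * snd (indicator_rep lr (upset X lr {fst g}) :: ('p,'k::field) prep) z z'
     = snd N z z' * colblk X lr N g z"
proof (cases "z \<in> upset X lr {fst g}")
  case True
  then have lz: "lr (fst g) z" by (auto simp: upset_def)
  then have z': "z' \<in> upset X lr {fst g}" using tr[OF x zz(1) zz(2) lz zz(3)] zz by (auto simp: upset_def)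
  let ?V = "mat_of_cols (fst N (fst g)) [snd g]"
  have V: "?V \<in> carrier_mat (fst N (fst g)) 1"
    using mat_of_cols_carrier[of "fst N (fst g)" "[snd g]"] by simp
  have c1: "snd N (fst g) z' * ?V \<in> carrier_mat (fst N z') 1"
    by (rule mult_carrier_mat[OF is_rep_carrier[OF N] V])
  have "colblk X lr N g z' * snd (indicator_rep lr (upset X lr {fst g}) :: ('p,'k) prep) z z'
     = snd N (fst g) z' * ?V" using True z' zz c1 by (simp add: colblk_def ind_snd)
  also have "snd N (fst g) z' = snd N z z' * snd N (fst g) z"
    by (rule is_repD(5)[OF N x zz(1) zz(2) lz zz(3)])
  also have "snd N z z' * snd N (fst g) z * ?V = snd N z z' * (snd N (fst g) z * ?V)"
    by (rule assoc_mult_mat[OF is_rep_carrier[OF N] is_rep_carrier[OF N] V])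
  also have "\<dots> = snd N z z' * colblk X lr N g z" using True by (simp add: colblk_def)
  finally show ?thesis .
next
  case False
  have c: "colblk X lr N g z' * snd (indicator_rep lr (upset X lr {fst g}) :: ('p,'k) prep) z z'
     \<in> carrier_mat (fst N z') 0"
    using mult_carrier_mat[OF colblk_carrier[OF N, of g z'] ind_carrier[of lr "upset X lr {fst g}" z z']] False
    by (simp add: ind_fst)
  have "snd N z z' * colblk X lr N g z = 0\<^sub>m (fst N z') 0"
    using False is_rep_carrier[OF N, of z z'] by (simp add: colblk_def)
  then show ?thesis using zero_cols[OF c] by simp
qed

lemma fm_nat:
  assumes N: "is_rep X lr N" and gs: "\<forall>g\<in>set gs. fst g \<in> X" and zz: "z \<in> X" "z' \<in> X" "lr z z'"
  shows "fm X lr N gs z' * snd (free_rep X lr (map fst gs) :: ('p,'k::field) prep) z z' = snd N z z' * fm X lr N gs z"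
  using gs
proof (induct gs)
  case Nil
  then show ?case using is_rep_carrier[OF N, of z z'] by (simp add: free_Nil zero_rep_def)
next
  case (Cons g gs)
  let ?I = "indicator_rep lr (upset X lr {fst g}) :: ('p,'k) prep"
  let ?F = "free_rep X lr (map fst gs) :: ('p,'k) prep"
  have IH: "fm X lr N gs z' * snd ?F z z' = snd N z z' * fm X lr N gs z" using Cons by auto
  have x: "fst g \<in> X" using Cons.prems by auto
  have e1: "fm X lr N (g # gs) z' = four_block_mat (colblk X lr N g z') (fm X lr N gs z') (0\<^sub>m 0 (fst ?I z')) (0\<^sub>m 0 (fst ?F z'))"
    by (simp add: ind_fst free_fst)
  have e2: "fm X lr N (g # gs) z = four_block_mat (colblk X lr N g z) (fm X lr N gs z) (0\<^sub>m 0 (fst ?I z)) (0\<^sub>m 0 (fst ?F z))"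
    by (simp add: ind_fst free_fst)
  have "fm X lr N (g # gs) z' * snd (free_rep X lr (map fst (g # gs)) :: ('p,'k) prep) z z'
    = four_block_mat (colblk X lr N g z') (fm X lr N gs z') (0\<^sub>m 0 (fst ?I z')) (0\<^sub>m 0 (fst ?F z'))
      * four_block_mat (snd ?I z z') (0\<^sub>m (fst ?I z') (fst ?F z)) (0\<^sub>m (fst ?F z') (fst ?I z)) (snd ?F z z')"
    unfolding e1 by (simp add: free_Cons dsum_snd)
  also have "\<dots> = four_block_mat (colblk X lr N g z' * snd ?I z z') (fm X lr N gs z' * snd ?F z z')
      (0\<^sub>m 0 (fst ?I z)) (0\<^sub>m 0 (fst ?F z))"
    by (rule H2[OF colblk_carrier[OF N] fm_carrier[OF N] ind_carrier]) (rule is_rep_carrier[OF free_rep_rep]; use Cons.prems in auto)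
  also have "\<dots> = four_block_mat (snd N z z' * colblk X lr N g z) (snd N z z' * fm X lr N gs z)
      (0\<^sub>m 0 (fst ?I z)) (0\<^sub>m 0 (fst ?F z))"
    using colblk_nat[OF N x zz] IH by simp
  also have "\<dots> = snd N z z' * fm X lr N (g # gs) z"
    unfolding e2
    by (rule H1[symmetric, OF is_rep_carrier[OF N] colblk_carrier[OF N] fm_carrier[OF N]])
  finally show ?case .
qed

lemma fm_mor:
  assumes N: "is_rep X lr N" and gs: "\<forall>g\<in>set gs. fst g \<in> X"
  shows "is_mor X lr (free_rep X lr (map fst gs)) N (fm X lr N gs)"
proof (rule is_morI)
  show F: "is_rep X lr (free_rep X lr (map fst gs))" by (rule free_rep_rep) (use gs in auto)
  show "is_rep X lr N" by (rule N)
  fix p assume p: "p \<notin> X"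
  have "fm X lr N gs p \<in> carrier_mat 0 0"
    using fm_carrier[OF N, of gs p] is_repD(1)[OF N p] nfree_out[OF p] by (simp add: free_fst)
  then have "fm X lr N gs p = 0\<^sub>m 0 0" by (rule zero_cols)
  then show "fm X lr N gs p = 0\<^sub>m (fst N p) (fst (free_rep X lr (map fst gs)) p)"
    using is_repD(1)[OF N p] nfree_out[OF p] by (simp add: free_fst)
next
  fix p show "fm X lr N gs p \<in> carrier_mat (fst N p) (fst (free_rep X lr (map fst gs)) p)"
    by (rule fm_carrier[OF N])
next
  fix p q assume "p \<in> X" "q \<in> X" "lr p q"
  then show "fm X lr N gs q * snd (free_rep X lr (map fst gs)) p q = snd N p q * fm X lr N gs p"
    using fm_nat[OF N gs] by blast
qed

end

context preo begin

lemma gen_exists: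
  assumes fX: "finite X" and N: "is_rep X lr (N :: ('p,'k::field) prep)"
    and K: "\<And>z. z \<in> X \<Longrightarrow> subsp (fst N z) (K z)"
    and Kc: "\<And>x z v. x \<in> X \<Longrightarrow> z \<in> X \<Longrightarrow> lr x z \<Longrightarrow> v \<in> K x \<Longrightarrow> snd N x z *\<^sub>v v \<in> K z"
    and Ks: "\<And>z. z \<in> X \<Longrightarrow> \<exists>L. set L \<subseteq> K z \<and> K z \<subseteq> lspan (fst N z) L"
  shows "\<exists>gs. (\<forall>g\<in>set gs. fst g \<in> X) \<and> is_mor X lr (free_rep X lr (map fst gs)) N (fm X lr N gs) \<and>
     (\<forall>z\<in>X. mat_img (fm X lr N gs z) = K z)"
proof -
  obtain xs where xs: "set xs = X" using finite_list[OF fX] by blast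
  define L where "L z = (SOME L. set L \<subseteq> K z \<and> K z \<subseteq> lspan (fst N z) L)" for z
  have L: "set (L z) \<subseteq> K z \<and> K z \<subseteq> lspan (fst N z) (L z)" if "z \<in> X" for z
    unfolding L_def by (rule someI_ex[OF Ks[OF that]])
  define gs where "gs = concat (map (\<lambda>x. map (\<lambda>v. (x, v)) (L x)) xs)"
  have sgs: "set gs = {(x, v) | x v. x \<in> X \<and> v \<in> set (L x)}" unfolding gs_def using xs by auto
  have gX: "\<forall>g\<in>set gs. fst g \<in> X" using sgs by auto
  have Kcar: "K z \<subseteq> carrier_vec (fst N z)" if "z \<in> X" for z using K[OF that] unfolding subsp_def by blast
  have gc: "\<forall>g\<in>set gs. snd g \<in> carrier_vec (fst N (fst g))" using sgs L Kcar by fastforce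
  have img: "mat_img (fm X lr N gs z) = K z" if z: "z \<in> X" for z
  proof -
    have gatc: "set (gat X lr N gs z) \<subseteq> carrier_vec (fst N z)"
      using gc is_rep_carrier[OF N] by (auto simp: gat_def intro!: mult_mat_vec_carrier)
    have gatK: "set (gat X lr N gs z) \<subseteq> K z"
    proof
      fix w assume "w \<in> set (gat X lr N gs z)"
      then obtain x v where xv: "(x, v) \<in> set gs" "z \<in> upset X lr {x}" and w: "w = snd N x z *\<^sub>v v"
        unfolding gat_def by auto
      have x: "x \<in> X" and v: "v \<in> K x" using xv(1) sgs L by auto
      have "lr x z" using xv(2) by (auto simp: upset_def)
      then show "w \<in> K z" unfolding w using Kc[OF x z _ v] by blast
    qed
    have LG: "set (L z) \<subseteq> set (gat X lr N gs z)"
    proof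
      fix v assume v: "v \<in> set (L z)"
      then have zv: "(z, v) \<in> set gs" using sgs z by auto
      have zu: "z \<in> upset X lr {z}" using z rf by (auto simp: upset_def)
      have vc: "v \<in> carrier_vec (fst N z)" using v L[OF z] Kcar[OF z] by blast
      have vv: "snd N z z *\<^sub>v v = v" using is_repD(4)[OF N z] vc by simp
      have "(z, v) \<in> set (filter (\<lambda>g. z \<in> upset X lr {fst g}) gs)" using zv zu by simp
      then have "snd N (fst (z, v)) z *\<^sub>v snd (z, v) \<in> set (gat X lr N gs z)"
        unfolding gat_def set_map by (rule imageI)
      then show "v \<in> set (gat X lr N gs z)" using vv by simp
    qed
    have "mat_img (fm X lr N gs z) = lspan (fst N z) (gat X lr N gs z)" by (rule fm_img[OF N gc])
    moreover have "lspan (fst N z) (gat X lr N gs z) \<subseteq> K z" by (rule lspan_sub[OF K[OF z] gatK])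
    moreover have "K z \<subseteq> lspan (fst N z) (gat X lr N gs z)"
      using L[OF z] lspan_mono[OF LG gatc] by blast
    ultimately show ?thesis by blast
  qed
  show ?thesis using gX fm_mor[OF N gX] img by blast
qed

lemma fin_fp:
  assumes fX: "finite X" and N: "is_rep X lr (N :: ('p,'k::field) prep)"
  shows "is_fp X lr N"
proof -
  have "\<exists>gs. (\<forall>g\<in>set gs. fst g \<in> X) \<and> is_mor X lr (free_rep X lr (map fst gs)) N (fm X lr N gs) \<and>
     (\<forall>z\<in>X. mat_img (fm X lr N gs z) = carrier_vec (fst N z))"
  proof (rule gen_exists[OF fX N])
    fix z show "subsp (fst N z) (carrier_vec (fst N z))" unfolding subsp_def by auto
  next
    fix x z and v :: "'k vec" assume "v \<in> carrier_vec (fst N x)"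
    then show "snd N x z *\<^sub>v v \<in> carrier_vec (fst N z)" by (rule mult_mat_vec_carrier[OF is_rep_carrier[OF N]])
  next
    fix z
    have "mat_ker (0\<^sub>m 0 (fst N z) :: 'k mat) = carrier_vec (fst N z)" unfolding mat_ker_def by auto
    then show "\<exists>L :: 'k vec list. set L \<subseteq> carrier_vec (fst N z) \<and> carrier_vec (fst N z) \<subseteq> lspan (fst N z) L"
      using kernel_span[of "0\<^sub>m 0 (fst N z) :: 'k mat" 0 "fst N z"] by auto
  qed
  then obtain gs1 where g1: "\<forall>g\<in>set gs1. fst g \<in> X"
    and e: "is_mor X lr (free_rep X lr (map fst gs1)) N (fm X lr N gs1)"
    and eimg: "\<forall>z\<in>X. mat_img (fm X lr N gs1 z) = carrier_vec (fst N z)" by blast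
  define N' where "N' = (free_rep X lr (map fst gs1) :: ('p,'k) prep)"
  define e' where "e' = fm X lr N gs1"
  have N': "is_rep X lr N'" using is_morD(1)[OF e] unfolding N'_def .
  have e': "is_mor X lr N' N e'" using e unfolding N'_def e'_def .
  have "\<exists>gs. (\<forall>g\<in>set gs. fst g \<in> X) \<and> is_mor X lr (free_rep X lr (map fst gs)) N' (fm X lr N' gs) \<and>
     (\<forall>z\<in>X. mat_img (fm X lr N' gs z) = mat_ker (e' z))"
  proof (rule gen_exists[OF fX N'])
    fix z assume z: "z \<in> X"
    have c: "e' z \<in> carrier_mat (fst N z) (fst N' z)" using is_mor_carrier[OF e'] .
    show "subsp (fst N' z) (mat_ker (e' z))" unfolding subsp_def mat_ker_def
      using c by (auto simp: mult_add_distrib_mat_vec mult_mat_vec)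
  next
    fix x z v assume xz: "x \<in> X" "z \<in> X" "lr x z" and v: "v \<in> mat_ker (e' x)"
    have cx: "e' x \<in> carrier_mat (fst N x) (fst N' x)" "e' z \<in> carrier_mat (fst N z) (fst N' z)"
      using is_mor_carrier[OF e'] by blast+
    have vc: "v \<in> carrier_vec (fst N' x)" and v0: "e' x *\<^sub>v v = 0\<^sub>v (fst N x)"
      using v cx unfolding mat_ker_def by auto
    have T': "snd N' x z \<in> carrier_mat (fst N' z) (fst N' x)" using is_rep_carrier[OF N'] .
    have T: "snd N x z \<in> carrier_mat (fst N z) (fst N x)" using is_rep_carrier[OF N] .
    have "e' z *\<^sub>v (snd N' x z *\<^sub>v v) = (e' z * snd N' x z) *\<^sub>v v"
      using cx T' vc by simp
    also have "\<dots> = (snd N x z * e' x) *\<^sub>v v" using is_morD(5)[OF e' xz] by simp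
    also have "\<dots> = snd N x z *\<^sub>v (e' x *\<^sub>v v)" using cx T vc by simp
    also have "\<dots> = 0\<^sub>v (fst N z)" using v0 T by (auto intro!: eq_vecI simp: scalar_prod_def)
    finally show "snd N' x z *\<^sub>v v \<in> mat_ker (e' z)"
      unfolding mat_ker_def using cx T' vc by auto
  next
    fix z
    show "\<exists>L. set L \<subseteq> mat_ker (e' z) \<and> mat_ker (e' z) \<subseteq> lspan (fst N' z) L"
      using kernel_span[OF is_mor_carrier[OF e', of z]] by blast
  qed
  then obtain gs2 where g2: "\<forall>g\<in>set gs2. fst g \<in> X"
    and h: "is_mor X lr (free_rep X lr (map fst gs2)) N' (fm X lr N' gs2)"
    and himg: "\<forall>z\<in>X. mat_img (fm X lr N' gs2 z) = mat_ker (e' z)" by blast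
  show ?thesis unfolding is_fp_def
  proof (intro conjI exI)
    show "is_rep X lr N" by (rule N)
    show "set (map fst gs2) \<subseteq> X" "set (map fst gs1) \<subseteq> X" using g1 g2 by auto
    show "is_mor X lr (free_rep X lr (map fst gs2)) (free_rep X lr (map fst gs1)) (fm X lr N' gs2)"
      using h unfolding N'_def .
    show "is_mor X lr (free_rep X lr (map fst gs1)) N e'" using e unfolding e'_def .
    show "\<forall>p\<in>X. mat_img (fm X lr N' gs2 p) = mat_ker (e' p) \<and> mat_img (e' p) = carrier_vec (fst N p)"
      using himg eimg unfolding e'_def by blast
  qed
qed

end

context gridinc begin

definition pre :: "'b list set \<Rightarrow> 'a list set" where
  "pre S = {p \<in> DD. flo p \<in> S}"

lemma pre_sub: "pre S \<subseteq> XP" using DD_sub by (auto simp: pre_def)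

lemma iota_pre: "s \<in> S \<Longrightarrow> S \<subseteq> XQ \<Longrightarrow> iota s \<in> pre S"
  using iota_DD flo_iota by (auto simp: pre_def)

lemma pre_convex:
  assumes S: "S \<subseteq> XQ" "convex_in XQ grid_le S"
  shows "convex_in XP grid_le (pre S)"
  unfolding convex_in_def
proof (intro ballI impI)
  fix s s' p assume s: "s \<in> pre S" "s' \<in> pre S" "p \<in> XP" "grid_le s p \<and> grid_le p s'"
  have sD: "s \<in> DD" "s' \<in> DD" using s by (auto simp: pre_def)
  have pD: "p \<in> DD" using DD_up[OF sD(1) s(3)] s(4) by blast
  have "grid_le (flo s) (flo p)" "grid_le (flo p) (flo s')" using flo_mono sD pD s(4) by blast+
  moreover have "flo s \<in> S" "flo s' \<in> S" using s by (auto simp: pre_def)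
  ultimately have "flo p \<in> S" using S(2) flo_XQ[OF pD] unfolding convex_in_def by blast
  then show "p \<in> pre S" using pD by (simp add: pre_def)
qed

lemma pre_spread:
  assumes S: "spread XQ grid_le S"
  shows "spread XP grid_le (pre S)"
proof -
  have SX: "S \<subseteq> XQ" and cv: "convex_in XQ grid_le S" and cn: "connected_in grid_le S"
    using S unfolding spread_def by auto
  let ?RS = "\<lambda>x y. x \<in> S \<and> y \<in> S \<and> (grid_le x y \<or> grid_le y x)"
  let ?RP = "\<lambda>x y. x \<in> pre S \<and> y \<in> pre S \<and> (grid_le x y \<or> grid_le y x)"
  have lift: "?RP\<^sup>*\<^sup>* (iota s) (iota t)" if "?RS\<^sup>*\<^sup>* s t" "s \<in> S" for s t
    using that
  proof (induct rule: rtranclp_induct)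
    case base then show ?case by simp
  next
    case (step y z)
    have yz: "y \<in> S" "z \<in> S" using step by auto
    have "?RP (iota y) (iota z)"
      using iota_pre[OF yz(1) SX] iota_pre[OF yz(2) SX] iota_mono SX yz step(2) by blast
    moreover have "?RP\<^sup>*\<^sup>* (iota s) (iota y)" using step by blast
    ultimately show ?case by (rule rtranclp.rtrancl_into_rtrancl[rotated])
  qed
  have down: "?RP p (iota (flo p))" if "p \<in> pre S" for p
  proof -
    have pD: "p \<in> DD" and fS: "flo p \<in> S" using that by (auto simp: pre_def)
    show ?thesis using that iota_pre[OF fS SX] iota_flo_le[OF pD] by blast
  qed
  have conn: "connected_in grid_le (pre S)"
    unfolding connected_in_def
  proof (intro conjI ballI)
    obtain s where s: "s \<in> S" using cn unfolding connected_in_def by blast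
    show "pre S \<noteq> {}" using iota_pre[OF s SX] by blast
  next
    fix p p' assume p: "p \<in> pre S" and p': "p' \<in> pre S"
    have fS: "flo p \<in> S" "flo p' \<in> S" using p p' by (auto simp: pre_def)
    have "?RS\<^sup>*\<^sup>* (flo p) (flo p')" using cn fS unfolding connected_in_def by blast
    then have m: "?RP\<^sup>*\<^sup>* (iota (flo p)) (iota (flo p'))" using lift fS by blast
    have a: "?RP\<^sup>*\<^sup>* p (iota (flo p))" using down[OF p] by blast
    have b: "?RP\<^sup>*\<^sup>* (iota (flo p')) p'" using down[OF p'] by blast
    show "?RP\<^sup>*\<^sup>* p p'" using a m b by (meson rtranclp_trans)
  qed
  show ?thesis unfolding spread_def using pre_sub pre_convex[OF SX cv] conn by blast
qed

lemma Lo_ind: "Lo.R (indicator_rep grid_le S) = indicator_rep grid_le (pre S)"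
  unfolding pre_def by (rule Lo.R_indicator)

lemma Lo_dsum_list_ind:
  "Lo.R (dsum_list (map (indicator_rep grid_le) Ss)) = dsum_list (map (indicator_rep grid_le) (map pre Ss))"
  unfolding Lo.R_dsum_list map_map by (simp add: comp_def Lo_ind)

lemma Lo_iso:
  assumes u: "is_iso XQ grid_le A B u"
  shows "is_iso XP grid_le (Lo.R A) (Lo.R B) (Lo.Rm u)"
proof -
  obtain v where um: "is_mor XQ grid_le A B u" and vm: "is_mor XQ grid_le B A v"
    and vu: "comp_mor v u = id_mor XQ A" and uv: "comp_mor u v = id_mor XQ B"
    using u unfolding is_iso_def by blast
  have A: "is_rep XQ grid_le A" and B: "is_rep XQ grid_le B" using is_morD um by blast+
  show ?thesis unfolding is_iso_def
  proof (intro conjI exI)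
    show "is_mor XP grid_le (Lo.R A) (Lo.R B) (Lo.Rm u)" by (rule Lo.R_mor[OF um])
    show "is_mor XP grid_le (Lo.R B) (Lo.R A) (Lo.Rm v)" by (rule Lo.R_mor[OF vm])
    show "comp_mor (Lo.Rm v) (Lo.Rm u) = id_mor XP (Lo.R A)"
      unfolding Lo.R_comp[symmetric] vu by (rule Lo.R_id[OF A])
    show "comp_mor (Lo.Rm u) (Lo.Rm v) = id_mor XP (Lo.R B)"
      unfolding Lo.R_comp[symmetric] uv by (rule Lo.R_id[OF B])
  qed
qed

lemma Lo_summand:
  assumes C: "spread_summand XQ grid_le (C :: ('b list, 'k::field) prep)"
  shows "spread_summand XP grid_le (Lo.R C)"
proof -
  obtain C' Ss u where C1: "is_fp XQ grid_le C" and C'1: "is_fp XQ grid_le C'"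
    and Ss: "\<forall>S\<in>set Ss. spread XQ grid_le S \<and> is_fp XQ grid_le (indicator_rep grid_le S :: ('b list, 'k) prep)"
    and u: "is_iso XQ grid_le (dsum C C') (dsum_list (map (indicator_rep grid_le) Ss)) u"
    using C unfolding spread_summand_def by blast
  show ?thesis unfolding spread_summand_def
  proof (intro conjI exI)
    show "is_fp XP grid_le (Lo.R C)" by (rule Lo_fp[OF C1])
    show "is_fp XP grid_le (Lo.R C')" by (rule Lo_fp[OF C'1])
    show "\<forall>S\<in>set (map pre Ss). spread XP grid_le S \<and> is_fp XP grid_le (indicator_rep grid_le S :: ('a list, 'k) prep)"
    proof
      fix S' assume "S' \<in> set (map pre Ss)"
      then obtain S where S: "S \<in> set Ss" and S': "S' = pre S" by auto
      have sp: "spread XQ grid_le S" and fp: "is_fp XQ grid_le (indicator_rep grid_le S :: ('b list, 'k) prep)"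
        using Ss S by auto
      have "is_fp XP grid_le (Lo.R (indicator_rep grid_le S :: ('b list, 'k) prep))" by (rule Lo_fp[OF fp])
      then show "spread XP grid_le S' \<and> is_fp XP grid_le (indicator_rep grid_le S' :: ('a list, 'k) prep)"
        unfolding Lo_ind S' using pre_spread[OF sp] by simp
    qed
    show "is_iso XP grid_le (dsum (Lo.R C) (Lo.R C')) (dsum_list (map (indicator_rep grid_le) (map pre Ss))) (Lo.Rm u)"
      using Lo_iso[OF u] unfolding Lo.R_dsum Lo_dsum_list_ind .
  qed
qed

end

lemma gjoin_ge_eq: "grid_le ys xs \<Longrightarrow> gjoin xs ys = xs"
  by (rule nth_equalityI) (auto simp: grid_le_iff gjoin_nth max_def)

lemma same_zero_dim:
  fixes A B :: "'k::field mat"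
  assumes A: "A \<in> carrier_mat r c" and B: "B \<in> carrier_mat r c" and rc: "r = 0 \<or> c = 0"
  shows "A = B"
proof (cases "r = 0")
  case True
  then show ?thesis using zero_rows[of A c] zero_rows[of B c] A B by simp
next
  case False
  then have "c = 0" using rc by simp
  then show ?thesis using zero_cols[of A r] zero_cols[of B r] A B by simp
qed

locale liftctx = gridinc Ps Qs \<iota>s
  for Ps :: "'a::linorder set list" and Qs :: "'b::linorder set list" and \<iota>s +
  fixes M :: "('b list, 'k::field) prep" and T :: "'a list set" and g :: "('a list, 'k) pmor"
  assumes M: "is_rep XQ grid_le M"
    and T: "spread XP grid_le T"
    and g: "is_mor XP grid_le (indicator_rep grid_le T) (Lo.R M) g"
begin

abbreviation "kT \<equiv> (indicator_rep grid_le T :: ('a list, 'k) prep)"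
abbreviation "LM \<equiv> Lo.R M"

lemma TX: "T \<subseteq> XP" using T unfolding spread_def by blast
lemma Tcv: "convex_in XP grid_le T" using T unfolding spread_def by blast

lemma lenP: "p \<in> XP \<Longrightarrow> length p = n" by (simp add: mem_grid)

lemma gnat: "p \<in> XP \<Longrightarrow> p' \<in> XP \<Longrightarrow> grid_le p p' \<Longrightarrow> g p' * snd kT p p' = snd LM p p' * g p"
  using is_morD(5)[OF g] by blast

lemma gcar: "g p \<in> carrier_mat (fst LM p) (fst kT p)" by (rule is_mor_carrier[OF g])

lemma gcarT: "p \<in> T \<Longrightarrow> p \<in> DD \<Longrightarrow> g p \<in> carrier_mat (fst M (flo p)) 1"
  using gcar[of p] by (simp add: res_fst ind_fst)

lemma LM_same: "p \<in> DD \<Longrightarrow> y \<in> DD \<Longrightarrow> grid_le p y \<Longrightarrow> flo y = flo p \<Longrightarrow> snd LM p y = 1\<^sub>m (fst M (flo p))"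
  using is_repD(4)[OF M flo_XQ] by (simp add: res_snd)

lemma LM_snd: "p \<in> DD \<Longrightarrow> y \<in> DD \<Longrightarrow> grid_le p y \<Longrightarrow> snd LM p y = snd M (flo p) (flo y)"
  by (simp add: res_snd)

definition Z :: "'b list set" where
  "Z = {q \<in> XQ. (\<exists>p\<in>T. p \<in> DD \<and> flo p = q) \<and> (\<forall>x\<in>DD. \<forall>t\<in>T. flo x = q \<and> grid_le t x \<longrightarrow> x \<in> T)}"

definition wit :: "'b list \<Rightarrow> 'a list" where
  "wit q = (SOME p. p \<in> T \<and> p \<in> DD \<and> flo p = q)"

definition G :: "'b list \<Rightarrow> 'k mat" where "G q = g (wit q)"

lemma Z_wit: "q \<in> Z \<Longrightarrow> wit q \<in> T \<and> wit q \<in> DD \<and> flo (wit q) = q"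
  unfolding wit_def Z_def by (rule someI_ex) blast

lemma ZX: "q \<in> Z \<Longrightarrow> q \<in> XQ" by (simp add: Z_def)

lemma Z_up: "q \<in> Z \<Longrightarrow> x \<in> DD \<Longrightarrow> t \<in> T \<Longrightarrow> flo x = q \<Longrightarrow> grid_le t x \<Longrightarrow> x \<in> T"
  unfolding Z_def by blast

lemma F1:
  assumes q: "q \<in> Z" and p: "p \<in> T" "p \<in> DD" "flo p = q" and p': "p' \<in> T" "p' \<in> DD" "flo p' = q"
  shows "g p = g p'"
proof -
  have pX: "p \<in> XP" "p' \<in> XP" using p p' DD_sub by blast+
  have l: "length p = length p'" using pX lenP by simp
  define y where "y = gjoin p p'"
  have yX: "y \<in> XP" unfolding y_def using gjoin_grid pX by blast
  have yD: "y \<in> DD" unfolding y_def using gjoin_DD p(2) pX(2) by blast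
  have fy: "flo y = q" unfolding y_def using flo_gjoin[OF p(2) p'(2)] p(3) p'(3) gjoin_le_eq grid_le_refl by metis
  have py: "grid_le p y" "grid_le p' y" unfolding y_def using gjoin_ge1 gjoin_ge2 l by blast+
  have yT: "y \<in> T" using Z_up[OF q yD p(1) fy py(1)] .
  have e: "g y = g z" if z: "z \<in> T" "z \<in> DD" "flo z = q" "grid_le z y" "z \<in> XP" for z
  proof -
    have "g y * snd kT z y = snd LM z y * g z" using gnat[OF z(5) yX z(4)] .
    moreover have "snd kT z y = 1\<^sub>m 1" using z yT by (simp add: ind_snd)
    moreover have "snd LM z y = 1\<^sub>m (fst M q)" using LM_same[OF z(2) yD z(4)] fy z(3) by simp
    moreover have "g y \<in> carrier_mat (fst M q) 1" using gcarT[OF yT yD] fy by simp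
    moreover have "g z \<in> carrier_mat (fst M q) 1" using gcarT[OF z(1) z(2)] z(3) by simp
    ultimately show ?thesis by simp
  qed
  show ?thesis using e[OF p py(1) pX(1)] e[OF p' py(2) pX(2)] by simp
qed

lemma F2:
  assumes p: "p \<in> T" "p \<in> DD" and nz: "flo p \<notin> Z"
  shows "g p = 0\<^sub>m (fst M (flo p)) 1"
proof -
  let ?q = "flo p"
  have pX: "p \<in> XP" using p DD_sub by blast
  have "?q \<in> XQ" using flo_XQ[OF p(2)] .
  then obtain x t where x: "x \<in> DD" "t \<in> T" "flo x = ?q" "grid_le t x" "x \<notin> T"
    using nz p unfolding Z_def by blast
  have xX: "x \<in> XP" using x DD_sub by blast
  have l: "length p = length x" using pX xX lenP by simp
  define y where "y = gjoin p x"
  have yX: "y \<in> XP" unfolding y_def using gjoin_grid pX xX by blast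
  have yD: "y \<in> DD" unfolding y_def using gjoin_DD p(2) xX by blast
  have fy: "flo y = ?q" unfolding y_def using flo_gjoin[OF p(2) x(1)] x(3) gjoin_le_eq grid_le_refl by metis
  have py: "grid_le p y" "grid_le x y" unfolding y_def using gjoin_ge1 gjoin_ge2 l by blast+
  have yT: "y \<notin> T"
  proof
    assume "y \<in> T"
    then have "x \<in> T" using Tcv x(2) xX x(4) py(2) unfolding convex_in_def by blast
    then show False using x(5) by simp
  qed
  have "g y * snd kT p y = snd LM p y * g p" using gnat[OF pX yX py(1)] .
  moreover have "snd LM p y = 1\<^sub>m (fst M ?q)" using LM_same[OF p(2) yD py(1)] fy by simp
  moreover have "g p \<in> carrier_mat (fst M ?q) 1" using gcarT[OF p] .
  moreover have "g y * snd kT p y = 0\<^sub>m (fst M ?q) 1"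
  proof (rule mult_inner_zero)
    show "g y \<in> carrier_mat (fst M ?q) 0" using gcar[of y] yD yT fy by (simp add: res_fst ind_fst)
    show "snd kT p y \<in> carrier_mat 0 1" using ind_carrier[of grid_le T p y] yT p by (simp add: ind_fst)
  qed
  ultimately show ?thesis by simp
qed

lemma F3: "p \<in> T \<Longrightarrow> p \<notin> DD \<Longrightarrow> g p = 0\<^sub>m 0 1"
  using gcar[of p] by (simp add: res_fst ind_fst zero_rows)

lemma G_eq: "q \<in> Z \<Longrightarrow> p \<in> T \<Longrightarrow> p \<in> DD \<Longrightarrow> flo p = q \<Longrightarrow> G q = g p"
  unfolding G_def using F1 Z_wit by blast

lemma G_car: "q \<in> Z \<Longrightarrow> G q \<in> carrier_mat (fst M q) 1"
  unfolding G_def using Z_wit gcarT by metis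

lemma N1:
  assumes q: "q \<in> Z" and q': "q' \<in> Z" and le: "grid_le q q'"
  shows "G q' = snd M q q' * G q"
proof -
  obtain p where p: "p \<in> T" "p \<in> DD" "flo p = q" using Z_wit[OF q] by blast
  have pX: "p \<in> XP" using p DD_sub by blast
  have q'X: "q' \<in> XQ" using ZX[OF q'] .
  define p' where "p' = gjoin p (iota q')"
  have l: "length p = length (iota q')" using pX lenP by simp
  have p'X: "p' \<in> XP" unfolding p'_def using gjoin_grid pX iota_XP[OF q'X] by blast
  have p'D: "p' \<in> DD" unfolding p'_def using gjoin_DD p(2) iota_XP[OF q'X] by blast
  have fp': "flo p' = q'" unfolding p'_def using flo_gjoin_iota[OF p(2) q'X] p(3) le by simp
  have pp': "grid_le p p'" unfolding p'_def using gjoin_ge1 l by blast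
  have p'T: "p' \<in> T" using Z_up[OF q' p'D p(1) fp' pp'] .
  have "g p' * snd kT p p' = snd LM p p' * g p" using gnat[OF pX p'X pp'] .
  moreover have "snd kT p p' = 1\<^sub>m 1" using p p'T pp' by (simp add: ind_snd)
  moreover have "snd LM p p' = snd M q q'" using LM_snd[OF p(2) p'D pp'] p(3) fp' by simp
  moreover have "g p' \<in> carrier_mat (fst M q') 1" using gcarT[OF p'T p'D] fp' by simp
  ultimately have "g p' = snd M q q' * g p" by simp
  then show ?thesis using G_eq[OF q' p'T p'D fp'] G_eq[OF q p] by simp
qed

lemma N2:
  assumes q: "q \<in> Z" and q'X: "q' \<in> XQ" and q': "q' \<notin> Z" and le: "grid_le q q'"
  shows "snd M q q' * G q = 0\<^sub>m (fst M q') 1"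
proof -
  obtain p where p: "p \<in> T" "p \<in> DD" "flo p = q" using Z_wit[OF q] by blast
  have pX: "p \<in> XP" using p DD_sub by blast
  define p' where "p' = gjoin p (iota q')"
  have l: "length p = length (iota q')" using pX lenP by simp
  have p'X: "p' \<in> XP" unfolding p'_def using gjoin_grid pX iota_XP[OF q'X] by blast
  have p'D: "p' \<in> DD" unfolding p'_def using gjoin_DD p(2) iota_XP[OF q'X] by blast
  have fp': "flo p' = q'" unfolding p'_def using flo_gjoin_iota[OF p(2) q'X] p(3) le by simp
  have pp': "grid_le p p'" unfolding p'_def using gjoin_ge1 l by blast
  have nat: "g p' * snd kT p p' = snd M q q' * G q"
    using gnat[OF pX p'X pp'] LM_snd[OF p(2) p'D pp'] p(3) fp' G_eq[OF q p] by simp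
  show ?thesis
  proof (cases "p' \<in> T")
    case True
    have "snd kT p p' = 1\<^sub>m 1" using p True pp' by (simp add: ind_snd)
    moreover have "g p' \<in> carrier_mat (fst M q') 1" using gcarT[OF True p'D] fp' by simp
    moreover have "g p' = 0\<^sub>m (fst M q') 1" using F2[OF True p'D] fp' q' by simp
    ultimately show ?thesis using nat by simp
  next
    case False
    have "g p' * snd kT p p' = 0\<^sub>m (fst M q') 1"
    proof (rule mult_inner_zero)
      show "g p' \<in> carrier_mat (fst M q') 0" using gcar[of p'] p'D False fp' by (simp add: res_fst ind_fst)
      show "snd kT p p' \<in> carrier_mat 0 1" using ind_carrier[of grid_le T p p'] False p by (simp add: ind_fst)
    qed
    then show ?thesis using nat by simp
  qed
qed

end

sublocale gridinc \<subseteq> PQ: preo XQ grid_le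
  by unfold_locales (auto simp: grid_le_refl intro: grid_le_trans)
sublocale gridinc \<subseteq> PP: preo XP grid_le
  by unfold_locales (auto simp: grid_le_refl intro: grid_le_trans)

context liftctx begin

definition SS :: "'b list set" where "SS = {q \<in> Z. G q \<noteq> 0\<^sub>m (fst M q) 1}"

lemma SS_Z: "SS \<subseteq> Z" by (auto simp: SS_def)
lemma SS_X: "SS \<subseteq> XQ" using SS_Z ZX by blast

lemma Z_convex:
  assumes q1: "q1 \<in> Z" and q2: "q2 \<in> Z" and q: "q \<in> XQ" and le: "grid_le q1 q" "grid_le q q2"
  shows "q \<in> Z"
proof -
  obtain p1 where p1: "p1 \<in> T" "p1 \<in> DD" "flo p1 = q1" using Z_wit[OF q1] by blast
  obtain p2 where p2: "p2 \<in> T" "p2 \<in> DD" "flo p2 = q2" using Z_wit[OF q2] by blast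
  have p1X: "p1 \<in> XP" and p2X: "p2 \<in> XP" using p1 p2 DD_sub by blast+
  have iq: "iota q \<in> XP" using iota_XP[OF q] .
  define r where "r = gjoin p1 (iota q)"
  have rX: "r \<in> XP" unfolding r_def using gjoin_grid p1X iq by blast
  have rD: "r \<in> DD" unfolding r_def using gjoin_DD p1(2) iq by blast
  have fr: "flo r = q" unfolding r_def using flo_gjoin_iota[OF p1(2) q] p1(3) le(1) by simp
  have p1r: "grid_le p1 r" unfolding r_def by (rule gjoin_ge1) (simp add: lenP[OF p1X])
  define r2 where "r2 = gjoin p2 r"
  have r2D: "r2 \<in> DD" unfolding r2_def using gjoin_DD p2(2) rX by blast
  have fr2: "flo r2 = q2" unfolding r2_def using flo_gjoin[OF p2(2) rD] p2(3) fr gjoin_ge_eq[OF le(2)] by simp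
  have lr: "length p2 = length r" using lenP[OF p2X] lenP[OF rX] by simp
  have p2r2: "grid_le p2 r2" "grid_le r r2" unfolding r2_def using gjoin_ge1[OF lr] gjoin_ge2[OF lr] by simp_all
  have r2T: "r2 \<in> T" using Z_up[OF q2 r2D p2(1) fr2 p2r2(1)] .
  have rT: "r \<in> T" using Tcv p1(1) r2T rX p1r p2r2(2) unfolding convex_in_def by blast
  have second: "x \<in> T" if x: "x \<in> DD" "t \<in> T" "flo x = q" "grid_le t x" for x t
  proof -
    have xX: "x \<in> XP" using x DD_sub by blast
    define x2 where "x2 = gjoin x p2"
    have x2D: "x2 \<in> DD" unfolding x2_def using gjoin_DD x(1) p2X by blast
    have x2X: "x2 \<in> XP" using x2D DD_sub by blast
    have fx2: "flo x2 = q2" unfolding x2_def using flo_gjoin[OF x(1) p2(2)] x(3) p2(3) gjoin_le_eq[OF le(2)] by simp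
    have xx2: "grid_le x x2" unfolding x2_def by (rule gjoin_ge1) (simp add: lenP[OF xX] lenP[OF p2X])
    have tx2: "grid_le t x2" using grid_le_trans x(4) xx2 by blast
    have "x2 \<in> T" using Z_up[OF q2 x2D x(2) fx2 tx2] .
    then show "x \<in> T" using Tcv x(2) xX x(4) xx2 unfolding convex_in_def by blast
  qed
  show ?thesis unfolding Z_def using q rT rD fr second by blast
qed

lemma SS_convex: "convex_in XQ grid_le SS"
  unfolding convex_in_def
proof (intro ballI impI)
  fix q1 q2 q assume q1: "q1 \<in> SS" and q2: "q2 \<in> SS" and q: "q \<in> XQ" and le: "grid_le q1 q \<and> grid_le q q2"
  have qZ: "q \<in> Z" using Z_convex q1 q2 q le SS_Z by blast
  have q2Z: "q2 \<in> Z" using q2 SS_Z by blast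
  have "G q2 = snd M q q2 * G q" using N1[OF qZ q2Z] le by blast
  moreover have "G q2 \<noteq> 0\<^sub>m (fst M q2) 1" using q2 by (simp add: SS_def)
  moreover have "snd M q q2 \<in> carrier_mat (fst M q2) (fst M q)" using is_rep_carrier[OF M] .
  ultimately have "G q \<noteq> 0\<^sub>m (fst M q) 1" by auto
  then show "q \<in> SS" using qZ by (simp add: SS_def)
qed

definition g' :: "('b list, 'k) pmor" where
  "g' q = (if q \<in> SS then G q else 0\<^sub>m (fst M q) 0)"

abbreviation "kS \<equiv> (indicator_rep grid_le SS :: ('b list, 'k) prep)"

lemma kS_rep: "is_rep XQ grid_le kS" by (rule PQ.ind_rep[OF SS_X SS_convex])

lemma g'_mor: "is_mor XQ grid_le kS M g'"
proof (rule is_morI[OF kS_rep M])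
  fix q assume "q \<notin> XQ"
  then show "g' q = 0\<^sub>m (fst M q) (fst kS q)" using SS_X by (auto simp: g'_def ind_fst)
next
  fix q assume "q \<in> XQ"
  show "g' q \<in> carrier_mat (fst M q) (fst kS q)"
    using G_car SS_Z by (auto simp: g'_def ind_fst)
next
  fix q q' assume qq: "q \<in> XQ" "q' \<in> XQ" "grid_le q q'"
  show "g' q' * snd kS q q' = snd M q q' * g' q"
  proof (cases "q \<in> SS")
    case True
    have qZ: "q \<in> Z" using True SS_Z by blast
    show ?thesis
    proof (cases "q' \<in> SS")
      case True2: True
      have q'Z: "q' \<in> Z" using True2 SS_Z by blast
      have e: "G q' = snd M q q' * G q" using N1[OF qZ q'Z qq(3)] .
      have "G q' * 1\<^sub>m 1 = G q'" using G_car[OF q'Z] by simp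
      then show ?thesis using True True2 e qq(3) by (simp add: g'_def ind_snd)
    next
      case False
      have rhs: "snd M q q' * G q = 0\<^sub>m (fst M q') 1"
      proof (cases "q' \<in> Z")
        case True3: True
        have "G q' = snd M q q' * G q" using N1[OF qZ True3 qq(3)] .
        then show ?thesis using False True3 by (simp add: SS_def)
      next
        case False3: False
        show ?thesis using N2[OF qZ qq(2) False3 qq(3)] .
      qed
      have "g' q' * snd kS q q' = 0\<^sub>m (fst M q') 1"
        using False True by (simp add: g'_def ind_snd)
      then show ?thesis using rhs True by (simp add: g'_def)
    qed
  next
    case False
    have c1: "g' q' * snd kS q q' \<in> carrier_mat (fst M q') 0"
    proof -
      have "g' q' \<in> carrier_mat (fst M q') (fst kS q')" using G_car SS_Z by (auto simp: g'_def ind_fst)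
      moreover have "snd kS q q' \<in> carrier_mat (fst kS q') 0" using ind_carrier[of grid_le SS q q'] False by (simp add: ind_fst)
      ultimately show ?thesis by (rule mult_carrier_mat)
    qed
    have c2: "snd M q q' * g' q \<in> carrier_mat (fst M q') 0"
      using False is_rep_carrier[OF M, of q q'] by (simp add: g'_def)
    show ?thesis using same_zero_dim[OF c1 c2] by simp
  qed
qed

end

context liftctx begin

abbreviation "kP \<equiv> (indicator_rep grid_le (pre SS) :: ('a list, 'k) prep)"

definition u :: "('a list, 'k) pmor" where
  "u p = (if p \<in> T \<and> p \<in> pre SS then 1\<^sub>m 1 else 0\<^sub>m (fst kP p) (fst kT p))"

lemma ucar: "u p \<in> carrier_mat (fst kP p) (fst kT p)"
  by (simp add: u_def ind_fst)

lemma gzero: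
  assumes p: "p \<in> T" "p \<notin> pre SS"
  shows "g p = 0\<^sub>m (fst LM p) 1"
proof (cases "p \<in> DD")
  case True
  show ?thesis
  proof (cases "flo p \<in> Z")
    case True2: True
    have "G (flo p) = g p" using G_eq[OF True2 p(1) True] by simp
    moreover have "flo p \<notin> SS" using p True by (simp add: pre_def)
    ultimately show ?thesis using True2 True by (simp add: SS_def res_fst)
  next
    case False
    then show ?thesis using F2[OF p(1) True] True by (simp add: res_fst)
  qed
next
  case False
  then show ?thesis using F3[OF p(1) False] by (simp add: res_fst)
qed

lemma kT_rep: "is_rep XP grid_le kT" by (rule PP.ind_rep[OF TX Tcv])
lemma kP_rep: "is_rep XP grid_le kP" by (rule PP.ind_rep[OF pre_sub pre_convex[OF SS_X SS_convex]])

lemma u_mor: "is_mor XP grid_le kT kP u"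
proof (rule is_morI[OF kT_rep kP_rep])
  fix p assume "p \<notin> XP"
  then have "p \<notin> T" using TX by blast
  then show "u p = 0\<^sub>m (fst kP p) (fst kT p)" by (simp add: u_def)
next
  fix p show "u p \<in> carrier_mat (fst kP p) (fst kT p)" by (rule ucar)
next
  fix p p' assume pp: "p \<in> XP" "p' \<in> XP" "grid_le p p'"
  have c1: "u p' * snd kT p p' \<in> carrier_mat (fst kP p') (fst kT p)"
    by (rule mult_carrier_mat[OF ucar ind_carrier])
  have c2: "snd kP p p' * u p \<in> carrier_mat (fst kP p') (fst kT p)"
    by (rule mult_carrier_mat[OF ind_carrier ucar])
  show "u p' * snd kT p p' = snd kP p p' * u p"
  proof (cases "p' \<in> pre SS")
    case False
    then show ?thesis using same_zero_dim[OF c1 c2] by (simp add: ind_fst)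
  next
    case p'S: True
    show ?thesis
    proof (cases "p' \<in> T")
      case False
      have "p \<notin> T \<or> p \<notin> pre SS"
      proof (rule ccontr)
        assume "\<not> (p \<notin> T \<or> p \<notin> pre SS)"
        then have pT: "p \<in> T" by blast
        have p'D: "p' \<in> DD" and fZ: "flo p' \<in> Z" using p'S SS_Z by (auto simp: pre_def)
        have "p' \<in> T" using Z_up[OF fZ p'D pT refl pp(3)] .
        then show False using False by simp
      qed
      then show ?thesis
      proof
        assume "p \<notin> T" then show ?thesis using same_zero_dim[OF c1 c2] by (simp add: ind_fst)
      next
        assume pS: "p \<notin> pre SS"
        show ?thesis
        proof (cases "p \<in> T")
          case False then show ?thesis using same_zero_dim[OF c1 c2] by (simp add: ind_fst)
        next
          case True
          have "u p' * snd kT p p' = 0\<^sub>m (fst kP p') (fst kT p)"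
            by (rule mult_inner_zero) (use ucar[of p'] ind_carrier[of grid_le T p p'] \<open>p' \<notin> T\<close> in \<open>auto simp: ind_fst\<close>)
          moreover have "snd kP p p' * u p = 0\<^sub>m (fst kP p') (fst kT p)"
            by (rule mult_inner_zero) (use ucar[of p] ind_carrier[of grid_le "pre SS" p p'] pS in \<open>auto simp: ind_fst\<close>)
          ultimately show ?thesis by simp
        qed
      qed
    next
      case p'T: True
      show ?thesis
      proof (cases "p \<in> T")
        case False then show ?thesis using same_zero_dim[OF c1 c2] by (simp add: ind_fst)
      next
        case pT: True
        show ?thesis
        proof (cases "p \<in> pre SS")
          case True
          then show ?thesis using pT p'T p'S pp(3) by (simp add: u_def ind_snd)
        next
          case False
          have p'D: "p' \<in> DD" and fS: "flo p' \<in> SS" using p'S by (auto simp: pre_def)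
          have "g p' * snd kT p p' = snd LM p p' * g p" by (rule gnat[OF pp])
          moreover have "snd kT p p' = 1\<^sub>m 1" using pT p'T pp(3) by (simp add: ind_snd)
          moreover have "g p = 0\<^sub>m (fst LM p) 1" by (rule gzero[OF pT False])
          moreover have "g p' \<in> carrier_mat (fst LM p') 1" using gcar[of p'] p'T by (simp add: ind_fst)
          moreover have "snd LM p p' \<in> carrier_mat (fst LM p') (fst LM p)" by (rule is_rep_carrier[OF Lo.R_rep[OF M]])
          ultimately have gp': "g p' = 0\<^sub>m (fst LM p') 1" by simp
          have "G (flo p') = g p'" using G_eq[OF _ p'T p'D refl] fS SS_Z by blast
          then have "G (flo p') = 0\<^sub>m (fst M (flo p')) 1" using gp' p'D by (simp add: res_fst)
          then show ?thesis using fS by (simp add: SS_def)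
        qed
      qed
    qed
  qed
qed

lemma final_eq: "comp_mor (Lo.Rm g') u = g"
proof
  fix p
  have gm: "is_mor XP grid_le kP LM (Lo.Rm g')" using Lo.R_mor[OF g'_mor] unfolding Lo_ind .
  have c: "Lo.Rm g' p \<in> carrier_mat (fst LM p) (fst kP p)" by (rule is_mor_carrier[OF gm])
  show "comp_mor (Lo.Rm g') u p = g p"
  proof (cases "p \<in> T")
    case False
    have c1: "Lo.Rm g' p * u p \<in> carrier_mat (fst LM p) 0"
      using mult_carrier_mat[OF c ucar] False by (simp add: ind_fst)
    have c2: "g p \<in> carrier_mat (fst LM p) 0" using gcar[of p] False by (simp add: ind_fst)
    show ?thesis using same_zero_dim[OF c1 c2] by (simp add: comp_mor_def)
  next
    case True
    show ?thesis
    proof (cases "p \<in> pre SS")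
      case True2: True
      have pD: "p \<in> DD" and fS: "flo p \<in> SS" using True2 by (auto simp: pre_def)
      have "Lo.Rm g' p = G (flo p)" using pD fS by (simp add: res_mor_app g'_def)
      moreover have "G (flo p) = g p" using G_eq[OF _ True pD refl] fS SS_Z by blast
      moreover have "g p \<in> carrier_mat (fst LM p) 1" using gcar[of p] True by (simp add: ind_fst)
      ultimately show ?thesis using True True2 by (simp add: comp_mor_def u_def)
    next
      case False
      have "Lo.Rm g' p * u p = 0\<^sub>m (fst LM p) 1"
        by (rule mult_inner_zero) (use c ucar[of p] False True in \<open>auto simp: ind_fst\<close>)
      then show ?thesis using gzero[OF True False] by (simp add: comp_mor_def)
    qed
  qed
qed

end

lemma rtranclp_sym:
  assumes sym: "\<And>x y. R x y \<Longrightarrow> R y x" and r: "R\<^sup>*\<^sup>* a b"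
  shows "R\<^sup>*\<^sup>* b a"
  using r
proof (induct rule: rtranclp_induct)
  case base then show ?case by simp
next
  case (step y z)
  then show ?case using sym by (meson converse_rtranclp_into_rtranclp)
qed

context preo begin

definition cconn :: "'p set \<Rightarrow> 'p \<Rightarrow> 'p \<Rightarrow> bool" where
  "cconn S = (\<lambda>x y. x \<in> S \<and> y \<in> S \<and> (lr x y \<or> lr y x))\<^sup>*\<^sup>*"

definition comp :: "'p set \<Rightarrow> 'p \<Rightarrow> 'p set" where
  "comp S x = {y \<in> S. cconn S x y}"

lemma cconn_sym: "cconn S x y \<Longrightarrow> cconn S y x"
  unfolding cconn_def by (rule rtranclp_sym) auto

lemma cconn_trans: "cconn S x y \<Longrightarrow> cconn S y z \<Longrightarrow> cconn S x z"
  unfolding cconn_def by (rule rtranclp_trans)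

lemma comp_self: "x \<in> S \<Longrightarrow> x \<in> comp S x"
  by (simp add: comp_def cconn_def)

lemma comp_sub: "comp S x \<subseteq> S" by (auto simp: comp_def)

lemma comp_step: "a \<in> comp S x \<Longrightarrow> b \<in> S \<Longrightarrow> lr a b \<or> lr b a \<Longrightarrow> b \<in> comp S x"
  unfolding comp_def cconn_def
  by (auto intro: rtranclp.rtrancl_into_rtrancl)

lemma comp_eq: "y \<in> comp S x \<Longrightarrow> comp S y = comp S x"
  unfolding comp_def using cconn_sym cconn_trans by blast

lemma comp_convex:
  assumes SX: "S \<subseteq> X" and cv: "convex_in X lr S"
  shows "convex_in X lr (comp S x)"
  unfolding convex_in_def
proof (intro ballI impI)
  fix a b z assume a: "a \<in> comp S x" and b: "b \<in> comp S x" and z: "z \<in> X" and le: "lr a z \<and> lr z b"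
  have "z \<in> S" using cv a b z le comp_sub unfolding convex_in_def by blast
  then show "z \<in> comp S x" using comp_step[OF a] le by blast
qed

lemma comp_connected:
  assumes x: "x \<in> S"
  shows "connected_in lr (comp S x)"
  unfolding connected_in_def
proof (intro conjI ballI)
  show "comp S x \<noteq> {}" using comp_self[OF x] by blast
  let ?RK = "\<lambda>a b. a \<in> comp S x \<and> b \<in> comp S x \<and> (lr a b \<or> lr b a)"
  have lift: "?RK\<^sup>*\<^sup>* x y" if "cconn S x y" for y
    using that unfolding cconn_def
  proof (induct rule: rtranclp_induct)
    case base then show ?case by simp
  next
    case (step y z)
    have yc: "y \<in> comp S x"
      using step(1) step(2) unfolding comp_def cconn_def by auto
    have zc: "z \<in> comp S x" using comp_step[OF yc] step(2) by blast
    have "?RK y z" using yc zc step(2) by blast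
    then show ?case using step(3) by (rule rtranclp.rtrancl_into_rtrancl[rotated])
  qed
  fix a b assume a: "a \<in> comp S x" and b: "b \<in> comp S x"
  have "?RK\<^sup>*\<^sup>* x a" "?RK\<^sup>*\<^sup>* x b" using lift a b by (auto simp: comp_def)
  then show "?RK\<^sup>*\<^sup>* a b" using rtranclp_sym[of ?RK] by (meson rtranclp_trans)
qed

lemma comp_lift:
  fixes M C :: "('p, 'k::field) prep"
  assumes fX: "finite X" and SX: "S \<subseteq> X" and cv: "convex_in X lr S"
    and gm: "is_mor X lr (indicator_rep lr S) M g'"
    and fm: "is_mor X lr C M f"
    and lift: "\<And>K g. spread X lr K \<Longrightarrow> is_fp X lr (indicator_rep lr K :: ('p, 'k) prep) \<Longrightarrow>
                 is_mor X lr (indicator_rep lr K) M g \<Longrightarrow> \<exists>h. is_mor X lr (indicator_rep lr K) C h \<and> comp_mor f h = g"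
  shows "\<exists>h'. is_mor X lr (indicator_rep lr S) C h' \<and> comp_mor f h' = g'"
proof -
  have M: "is_rep X lr M" and C: "is_rep X lr C" using is_morD fm by blast+
  define gK where "gK K q = (if q \<in> K then g' q else 0\<^sub>m (fst M q) 0)" for K q
  define hK where "hK K = (SOME h. is_mor X lr (indicator_rep lr K :: ('p, 'k) prep) C h \<and> comp_mor f h = gK K)" for K
  let ?IS = "indicator_rep lr S :: ('p, 'k) prep"
  have g'car: "g' q \<in> carrier_mat (fst M q) (fst ?IS q)" for q by (rule is_mor_carrier[OF gm])
  have K_props: "is_mor X lr (indicator_rep lr (comp S x)) C (hK (comp S x)) \<and> comp_mor f (hK (comp S x)) = gK (comp S x)"
    if x: "x \<in> S" for x
  proof -
    let ?K = "comp S x"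
    let ?IK = "indicator_rep lr ?K :: ('p, 'k) prep"
    have KX: "?K \<subseteq> X" using comp_sub SX by blast
    have Kcv: "convex_in X lr ?K" by (rule comp_convex[OF SX cv])
    have sp: "spread X lr ?K" unfolding spread_def using KX Kcv comp_connected[OF x] by blast
    have IK: "is_rep X lr ?IK" by (rule ind_rep[OF KX Kcv])
    have fp: "is_fp X lr ?IK" by (rule fin_fp[OF fX IK])
    have gKc: "gK ?K q \<in> carrier_mat (fst M q) (fst ?IK q)" for q
      using g'car[of q] comp_sub[of S x] by (auto simp: gK_def ind_fst)
    have gKm: "is_mor X lr ?IK M (gK ?K)"
    proof (rule is_morI[OF IK M])
      fix q assume "q \<notin> X" then show "gK ?K q = 0\<^sub>m (fst M q) (fst ?IK q)"
        using KX by (auto simp: gK_def ind_fst)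
    next
      fix q show "gK ?K q \<in> carrier_mat (fst M q) (fst ?IK q)" by (rule gKc)
    next
      fix q q' assume qq: "q \<in> X" "q' \<in> X" "lr q q'"
      have nat: "g' q' * snd ?IS q q' = snd M q q' * g' q" using is_morD(5)[OF gm qq] .
      have c1: "gK ?K q' * snd ?IK q q' \<in> carrier_mat (fst M q') (fst ?IK q)"
        by (rule mult_carrier_mat[OF gKc ind_carrier])
      have c2: "snd M q q' * gK ?K q \<in> carrier_mat (fst M q') (fst ?IK q)"
        by (rule mult_carrier_mat[OF is_rep_carrier[OF M] gKc])
      show "gK ?K q' * snd ?IK q q' = snd M q q' * gK ?K q"
      proof (cases "q \<in> ?K")
        case False
        then show ?thesis using same_zero_dim[OF c1 c2] by (simp add: ind_fst)
      next
        case True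
        then have qS: "q \<in> S" using comp_sub by blast
        show ?thesis
        proof (cases "q' \<in> ?K")
          case True2: True
          then have "q' \<in> S" using comp_sub by blast
          then show ?thesis using nat True True2 qS qq(3) by (simp add: gK_def ind_snd)
        next
          case False
          then have q'S: "q' \<notin> S" using comp_step[OF True] qq(3) by blast
          have "g' q' * snd ?IS q q' = 0\<^sub>m (fst M q') 1"
            by (rule mult_inner_zero) (use g'car[of q'] ind_carrier[of lr S q q'] q'S qS in \<open>auto simp: ind_fst\<close>)
          then have "snd M q q' * g' q = 0\<^sub>m (fst M q') 1" using nat by simp
          moreover have "gK ?K q' * snd ?IK q q' = 0\<^sub>m (fst M q') 1"
            using False True by (simp add: gK_def ind_snd)
          ultimately show ?thesis using True by (simp add: gK_def)
        qed
      qed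
    qed
    have ex: "\<exists>h. is_mor X lr ?IK C h \<and> comp_mor f h = gK ?K" using lift[OF sp fp gKm] by blast
    show ?thesis unfolding hK_def by (rule someI_ex[OF ex])
  qed
  define h' where "h' q = (if q \<in> S then hK (comp S q) q else 0\<^sub>m (fst C q) 0)" for q
  have IS: "is_rep X lr ?IS" by (rule ind_rep[OF SX cv])
  have hcar: "hK (comp S x) q \<in> carrier_mat (fst C q) (if q \<in> comp S x then 1 else 0)" if "x \<in> S" for x q
    using is_mor_carrier[OF conjunct1[OF K_props[OF that]], of q] by (simp add: ind_fst)
  have h'car: "h' q \<in> carrier_mat (fst C q) (fst ?IS q)" for q
    using hcar[of q q] comp_self[of q S] by (simp add: h'_def ind_fst)
  have h'm: "is_mor X lr ?IS C h'"
  proof (rule is_morI[OF IS C])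
    fix q assume "q \<notin> X" then show "h' q = 0\<^sub>m (fst C q) (fst ?IS q)"
      using SX by (auto simp: h'_def ind_fst)
  next
    fix q show "h' q \<in> carrier_mat (fst C q) (fst ?IS q)" by (rule h'car)
  next
    fix q q' assume qq: "q \<in> X" "q' \<in> X" "lr q q'"
    have c1: "h' q' * snd ?IS q q' \<in> carrier_mat (fst C q') (fst ?IS q)"
      by (rule mult_carrier_mat[OF h'car ind_carrier])
    have c2: "snd C q q' * h' q \<in> carrier_mat (fst C q') (fst ?IS q)"
      by (rule mult_carrier_mat[OF is_rep_carrier[OF C] h'car])
    show "h' q' * snd ?IS q q' = snd C q q' * h' q"
    proof (cases "q \<in> S")
      case False then show ?thesis using same_zero_dim[OF c1 c2] by (simp add: ind_fst)
    next
      case True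
      let ?K = "comp S q"
      have hm: "is_mor X lr (indicator_rep lr ?K) C (hK ?K)" using K_props[OF True] by blast
      have nat: "hK ?K q' * snd (indicator_rep lr ?K :: ('p, 'k) prep) q q' = snd C q q' * hK ?K q"
        using is_morD(5)[OF hm qq] .
      have qK: "q \<in> ?K" by (rule comp_self[OF True])
      show ?thesis
      proof (cases "q' \<in> S")
        case True2: True
        have q'K: "q' \<in> ?K" using comp_step[OF qK True2] qq(3) by blast
        have "comp S q' = ?K" by (rule comp_eq[OF q'K])
        then show ?thesis using nat True True2 qK q'K qq(3) by (simp add: h'_def ind_snd)
      next
        case False
        have q'K: "q' \<notin> ?K" using False comp_sub by blast
        have "hK ?K q' * snd (indicator_rep lr ?K :: ('p, 'k) prep) q q' = 0\<^sub>m (fst C q') 1"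
          by (rule mult_inner_zero) (use hcar[OF True, of q'] ind_carrier[of lr ?K q q'] q'K qK in \<open>auto simp: ind_fst\<close>)
        then have "snd C q q' * h' q = 0\<^sub>m (fst C q') 1" using nat True by (simp add: h'_def)
        moreover have "h' q' * snd ?IS q q' = 0\<^sub>m (fst C q') 1"
          by (rule mult_inner_zero) (use h'car[of q'] ind_carrier[of lr S q q'] False True in \<open>auto simp: ind_fst\<close>)
        ultimately show ?thesis by simp
      qed
    qed
  qed
  have eq: "comp_mor f h' = g'"
  proof
    fix q show "comp_mor f h' q = g' q"
    proof (cases "q \<in> S")
      case True
      have "comp_mor f (hK (comp S q)) q = gK (comp S q) q" using K_props[OF True] by simp
      then show ?thesis using True comp_self[OF True] by (simp add: comp_mor_def h'_def gK_def)
    next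
      case False
      have c1: "comp_mor f h' q \<in> carrier_mat (fst M q) 0"
        using mult_carrier_mat[OF is_mor_carrier[OF fm] h'car[of q]] False by (simp add: comp_mor_def ind_fst)
      have c2: "g' q \<in> carrier_mat (fst M q) 0" using g'car[of q] False by (simp add: ind_fst)
      show ?thesis using same_zero_dim[OF c1 c2] by simp
    qed
  qed
  show ?thesis using h'm eq by blast
qed

end

context gridinc begin

lemma Lo_lift:
  fixes C M :: "('b list, 'k::field) prep"
  assumes sa: "spread_approx XQ grid_le C M f"
    and T: "spread XP grid_le T" and g: "is_mor XP grid_le (indicator_rep grid_le T) (Lo.R M) g"
  shows "\<exists>h. is_mor XP grid_le (indicator_rep grid_le T) (Lo.R C) h \<and> comp_mor (Lo.Rm f) h = g"
proof -
  have Mfp: "is_fp XQ grid_le M" and fm: "is_mor XQ grid_le C M f"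
    and lift: "\<And>K g. spread XQ grid_le K \<Longrightarrow> is_fp XQ grid_le (indicator_rep grid_le K :: ('b list, 'k) prep) \<Longrightarrow>
                 is_mor XQ grid_le (indicator_rep grid_le K) M g \<Longrightarrow> \<exists>h. is_mor XQ grid_le (indicator_rep grid_le K) C h \<and> comp_mor f h = g"
    using sa unfolding spread_approx_def by blast+
  have M: "is_rep XQ grid_le M" using Mfp unfolding is_fp_def by blast
  interpret L: liftctx Ps Qs \<iota>s M T g by unfold_locales (rule M, rule T, rule g)
  obtain h' where h': "is_mor XQ grid_le L.kS C h'" and fh': "comp_mor f h' = L.g'"
    using PQ.comp_lift[OF XQ_finite L.SS_X L.SS_convex L.g'_mor fm lift] by blast
  have um: "is_mor XP grid_le L.kT (Lo.R L.kS) L.u" using L.u_mor unfolding Lo_ind .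
  have hm: "is_mor XP grid_le (Lo.R L.kS) (Lo.R C) (Lo.Rm h')" by (rule Lo.R_mor[OF h'])
  have fmm: "is_mor XP grid_le (Lo.R C) (Lo.R M) (Lo.Rm f)" by (rule Lo.R_mor[OF fm])
  show ?thesis
  proof (intro exI conjI)
    show "is_mor XP grid_le L.kT (Lo.R C) (comp_mor (Lo.Rm h') L.u)" by (rule is_mor_comp[OF um hm])
    have "comp_mor (Lo.Rm f) (comp_mor (Lo.Rm h') L.u) = comp_mor (comp_mor (Lo.Rm f) (Lo.Rm h')) L.u"
      by (rule comp_mor_assoc[OF um hm fmm])
    also have "\<dots> = comp_mor (Lo.Rm L.g') L.u" unfolding Lo.R_comp[symmetric] fh' ..
    also have "\<dots> = g" by (rule L.final_eq)
    finally show "comp_mor (Lo.Rm f) (comp_mor (Lo.Rm h') L.u) = g" .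
  qed
qed

lemma Lo_preserves: "preserves_spread_approx XQ grid_le XP grid_le Lo.R (\<lambda>M N f. Lo.Rm f)"
  unfolding preserves_spread_approx_def
proof (intro allI impI)
  fix C M :: "('b list, 'k::field) prep" and f
  assume sa: "spread_approx XQ grid_le C M f"
  have Mfp: "is_fp XQ grid_le M" and Cs: "spread_summand XQ grid_le C" and fm: "is_mor XQ grid_le C M f"
    using sa unfolding spread_approx_def by blast+
  show "spread_approx XP grid_le (Lo.R C) (Lo.R M) (Lo.Rm f)"
    unfolding spread_approx_def
  proof (intro conjI allI impI)
    show "is_fp XP grid_le (Lo.R M)" by (rule Lo_fp[OF Mfp])
    show "spread_summand XP grid_le (Lo.R C)" by (rule Lo_summand[OF Cs])
    show "is_mor XP grid_le (Lo.R C) (Lo.R M) (Lo.Rm f)" by (rule Lo.R_mor[OF fm])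
  next
    fix S g
    assume a: "spread XP grid_le S \<and> is_fp XP grid_le (indicator_rep grid_le S :: ('a list, 'k) prep) \<and>
         is_mor XP grid_le (indicator_rep grid_le S) (Lo.R M) g"
    show "\<exists>h. is_mor XP grid_le (indicator_rep grid_le S) (Lo.R C) h \<and> comp_mor (Lo.Rm f) h = g"
      using Lo_lift[OF sa] a by blast
  qed
qed

end

theorem propositionB:
  fixes Ps :: "'a::linorder set list" and Qs :: "'b::linorder set list"
    and \<iota>s :: "('b \<Rightarrow> 'a) list"
  assumes "aligned_grid_inclusion Qs Ps \<iota>s"
    and "\<forall>j<length Qs. finite (Qs ! j)"
  shows "\<exists>(Lo :: ('b list, 'k::field) prep \<Rightarrow> ('a list, 'k) prep)
           (Lm :: ('b list, 'k) prep \<Rightarrow> ('b list, 'k) prep \<Rightarrow> ('b list, 'k) pmor \<Rightarrow> ('a list, 'k) pmor).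
     left_adjoint_to_res (grid Qs) grid_le (grid Ps) grid_le (grid_map \<iota>s) Lo Lm \<and>
     exact_functor (grid Qs) grid_le (grid Ps) grid_le Lo Lm \<and>
     fully_faithful (grid Qs) grid_le (grid Ps) grid_le Lo Lm \<and>
     preserves_spread_approx (grid Qs) grid_le (grid Ps) grid_le Lo Lm"
proof -
  interpret G: gridinc Ps Qs \<iota>s by unfold_locales (rule assms(1), rule assms(2))
  show ?thesis
    using G.Lo_adj G.Lo_exact G.Lo_ff G.Lo_preserves by blast
qed

end
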